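(* Assume $\dim\mathfrak z=1$. Let $\mathcal Z\subseteq N$ be the set of all points $\gamma(t)$ ($t\neq0$) that are conjugate to $\gamma(0)=1$ along some geodesic $\gamma$ with $\gamma(0)=1$ and $\dot\gamma(0)\in\mathfrak v\setminus\{0\}$. Then $\mathcal Z$ is a real-analytic embedded submanifold of the hypersurface $\exp(\mathfrak v)$ of $N$, where $\exp$ is the Lie group exponential map.
   Context: Let $N$ be a connected, simply connected, 2-step nilpotent real Lie group with Lie algebra $\mathfrak n$ and center $\mathfrak z$; its Lie group exponential map $\exp:\mathfrak n\to N$ is a diffeomorphism. Let $\langle\,,\rangle$ be an inner product on $\mathfrak n$, meaning a nondegenerate symmetric bilinear form (possibly indefinite); the same symbol denotes the induced left-invariant pseudo-Riemannian metric on $N$, with Levi-Civita connection $\nabla$. Assume the restriction of $\langle\,,\rangle$ to $\mathfrak z$ is nondegenerate and put $\mathfrak v=\mathfrak z^\perp$, so $\mathfrak n=\mathfrak z\oplus\mathfrak v$. A Jacobi field along a geodesic $\gamma$ is a vector field $Y$ along $\gamma$ with $\nabla_{\dot\gamma}\nabla_{\dot\gamma}Y+R(Y,\dot\gamma)\dot\gamma=0$, where $R(X,Y)=\nabla_X\nabla_Y-\nabla_Y\nabla_X-\nabla_{[X,Y]}$; $\gamma(t_0)$ ($t_0\ne0$) is conjugate to $\gamma(0)$ along $\gamma$ if some nontrivial Jacobi field vanishes at $0$ and $t_0$. *)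

theory Defs
  imports "HOL-Analysis.Analysis"
begin

text \<open>
The simply connected 2-step nilpotent group N with Lie algebra n = real^'n
(bracket br) is realised, via the Lie group exponential, on real^'n itself with the
Baker-Campbell-Hausdorff product x*y = x + y + (1/2)[x,y]; exp is the identity map and
the identity element is 0.  Tangent vectors at p are represented by their left
trivialisation, i.e. v in T_pN is written as dL_p X with X in n; here
dL_p X = X + (1/2)[p,X] and its inverse is v - (1/2)[p,v].
\<close>

definition bch_mult :: "(real^'n \<Rightarrow> real^'n \<Rightarrow> real^'n) \<Rightarrow> real^'n \<Rightarrow> real^'n \<Rightarrow> real^'n" where
  "bch_mult br x y = x + y + (1/2) *\<^sub>R br x y"

text \<open>Levi-Civita connection on left-invariant fields (Koszul formula), using the
nondegenerate inner product B.\<close>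
definition lc_nabla :: "(real^'n \<Rightarrow> real^'n \<Rightarrow> real^'n) \<Rightarrow> (real^'n \<Rightarrow> real^'n \<Rightarrow> real)
    \<Rightarrow> real^'n \<Rightarrow> real^'n \<Rightarrow> real^'n" where
  "lc_nabla br B X Y =
     (THE w. \<forall>Z. B w Z = (B (br X Y) Z - B (br Y Z) X + B (br Z X) Y) / 2)"

text \<open>Curvature R(X,Y)Z = nabla_X nabla_Y Z - nabla_Y nabla_X Z - nabla_[X,Y] Z on
left-invariant fields (R is a left-invariant tensor).\<close>
definition lc_curv :: "(real^'n \<Rightarrow> real^'n \<Rightarrow> real^'n) \<Rightarrow> (real^'n \<Rightarrow> real^'n \<Rightarrow> real)
    \<Rightarrow> real^'n \<Rightarrow> real^'n \<Rightarrow> real^'n \<Rightarrow> real^'n" where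
  "lc_curv br B X Y Z =
     lc_nabla br B X (lc_nabla br B Y Z) - lc_nabla br B Y (lc_nabla br B X Z)
     - lc_nabla br B (br X Y) Z"

definition lt_vel :: "(real^'n \<Rightarrow> real^'n \<Rightarrow> real^'n) \<Rightarrow> (real \<Rightarrow> real^'n)
    \<Rightarrow> (real \<Rightarrow> real^'n) \<Rightarrow> real \<Rightarrow> real^'n" where
  "lt_vel br \<gamma> \<gamma>' s = \<gamma>' s - (1/2) *\<^sub>R br (\<gamma> s) (\<gamma>' s)"

definition geodesic_on :: "(real^'n \<Rightarrow> real^'n \<Rightarrow> real^'n) \<Rightarrow> (real^'n \<Rightarrow> real^'n \<Rightarrow> real)
    \<Rightarrow> real set \<Rightarrow> (real \<Rightarrow> real^'n) \<Rightarrow> (real \<Rightarrow> real^'n) \<Rightarrow> bool" where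
  "geodesic_on br B I \<gamma> \<gamma>' \<longleftrightarrow> open I \<and> is_interval I \<and>
     (\<forall>t\<in>I. (\<gamma> has_vector_derivative \<gamma>' t) (at t)) \<and>
     (\<exists>u'. \<forall>t\<in>I. (lt_vel br \<gamma> \<gamma>' has_vector_derivative u' t) (at t) \<and>
             u' t + lc_nabla br B (lt_vel br \<gamma> \<gamma>' t) (lt_vel br \<gamma> \<gamma>' t) = 0)"

text \<open>Jacobi field along gamma, given in the left-invariant frame by y : I \<rightarrow> n:
D_t D_t Y + R(Y, gamma') gamma' = 0, where D_t w = w' + nabla_u w.\<close>
definition jacobi_field :: "(real^'n \<Rightarrow> real^'n \<Rightarrow> real^'n) \<Rightarrow> (real^'n \<Rightarrow> real^'n \<Rightarrow> real)
    \<Rightarrow> real set \<Rightarrow> (real \<Rightarrow> real^'n) \<Rightarrow> (real \<Rightarrow> real^'n) \<Rightarrow> (real \<Rightarrow> real^'n) \<Rightarrow> bool" where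
  "jacobi_field br B I \<gamma> \<gamma>' y \<longleftrightarrow>
     (\<exists>y1 w1. \<forall>t\<in>I.
        (y has_vector_derivative y1 t) (at t) \<and>
        ((\<lambda>s. y1 s + lc_nabla br B (lt_vel br \<gamma> \<gamma>' s) (y s)) has_vector_derivative w1 t) (at t) \<and>
        w1 t + lc_nabla br B (lt_vel br \<gamma> \<gamma>' t) (y1 t + lc_nabla br B (lt_vel br \<gamma> \<gamma>' t) (y t))
          + lc_curv br B (y t) (lt_vel br \<gamma> \<gamma>' t) (lt_vel br \<gamma> \<gamma>' t) = 0)"

definition conjugate_along :: "(real^'n \<Rightarrow> real^'n \<Rightarrow> real^'n) \<Rightarrow> (real^'n \<Rightarrow> real^'n \<Rightarrow> real)
    \<Rightarrow> real set \<Rightarrow> (real \<Rightarrow> real^'n) \<Rightarrow> (real \<Rightarrow> real^'n) \<Rightarrow> real \<Rightarrow> bool" where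
  "conjugate_along br B I \<gamma> \<gamma>' t0 \<longleftrightarrow> 0 \<in> I \<and> t0 \<in> I \<and> t0 \<noteq> 0 \<and>
     (\<exists>y. jacobi_field br B I \<gamma> \<gamma>' y \<and> y 0 = 0 \<and> y t0 = 0 \<and> (\<exists>t\<in>I. y t \<noteq> 0))"

definition real_analytic_on :: "(real^'n \<Rightarrow> real^'m) \<Rightarrow> (real^'n) set \<Rightarrow> bool" where
  "real_analytic_on f U \<longleftrightarrow> (\<forall>p\<in>U. \<exists>r>0. \<exists>c :: ('n \<Rightarrow> nat) \<Rightarrow> real^'m.
     \<forall>x\<in>ball p r. ((\<lambda>\<alpha>. (\<Prod>i\<in>UNIV. (x $ i - p $ i) ^ \<alpha> i) *\<^sub>R c \<alpha>) has_sum f x) UNIV)"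

definition analytic_submanifold :: "(real^'n) set \<Rightarrow> bool" where
  "analytic_submanifold S \<longleftrightarrow> (\<forall>p\<in>S. \<exists>U V (\<phi> :: real^'n \<Rightarrow> real^'n) \<psi> (K :: 'n set).
     open U \<and> p \<in> U \<and> open V \<and> \<phi> ` U = V \<and> \<psi> ` V = U \<and>
     (\<forall>x\<in>U. \<psi> (\<phi> x) = x) \<and> (\<forall>y\<in>V. \<phi> (\<psi> y) = y) \<and>
     real_analytic_on \<phi> U \<and> real_analytic_on \<psi> V \<and>
     \<phi> ` (U \<inter> S) = V \<inter> {y. \<forall>i. i \<notin> K \<longrightarrow> y $ i = 0})"

end

theory Submission
  imports Defs
begin



definition mnm :: "real^'n \<Rightarrow> real^'n \<Rightarrow> ('n \<Rightarrow> nat) \<Rightarrow> real" where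
  "mnm p x \<alpha> = (\<Prod>i\<in>UNIV. (x $ i - p $ i) ^ \<alpha> i)"

definition mdeg :: "('n::finite \<Rightarrow> nat) \<Rightarrow> nat" where
  "mdeg \<alpha> = (\<Sum>i\<in>UNIV. \<alpha> i)"

definition AN :: "real^'n \<Rightarrow> (real^'n \<Rightarrow> real) \<Rightarrow> bool" where
  "AN p f \<longleftrightarrow> (\<exists>r>0. \<exists>c. (\<lambda>\<alpha>. \<bar>c \<alpha>\<bar> * r ^ mdeg \<alpha>) summable_on UNIV \<and>
      (\<forall>x\<in>ball p r. ((\<lambda>\<alpha>. mnm p x \<alpha> * c \<alpha>) has_sum f x) UNIV))"

lemma mnm_bound:
  assumes "dist p x \<le> s"
  shows "\<bar>mnm p x \<alpha>\<bar> \<le> s ^ mdeg \<alpha>"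
proof -
  have "\<bar>mnm p x \<alpha>\<bar> = (\<Prod>i\<in>UNIV. \<bar>x $ i - p $ i\<bar> ^ \<alpha> i)"
    by (simp add: mnm_def abs_prod power_abs)
  also have "\<dots> \<le> (\<Prod>i\<in>UNIV. s ^ \<alpha> i)"
  proof (rule prod_mono, rule conjI)
    fix i show "0 \<le> \<bar>x $ i - p $ i\<bar> ^ \<alpha> i" by simp
    have "\<bar>x $ i - p $ i\<bar> = \<bar>(x - p) $ i\<bar>" by simp
    also have "\<dots> \<le> norm (x - p)" by (rule component_le_norm_cart)
    also have "\<dots> \<le> s" using assms by (simp add: dist_norm norm_minus_commute)
    finally show "\<bar>x $ i - p $ i\<bar> ^ \<alpha> i \<le> s ^ \<alpha> i" by (simp add: power_mono)
  qed
  also have "\<dots> = s ^ mdeg \<alpha>" by (simp add: mdeg_def power_sum)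
  finally show ?thesis .
qed

lemma mnm_self: "mnm p p \<alpha> = (if \<alpha> = (\<lambda>_. 0) then 1 else 0)"
proof (cases "\<alpha> = (\<lambda>_. 0)")
  case True then show ?thesis by (simp add: mnm_def)
next
  case False
  then obtain i where "\<alpha> i \<noteq> 0" by auto
  then have "(p $ i - p $ i) ^ \<alpha> i = 0" by simp
  then have "mnm p p \<alpha> = 0" unfolding mnm_def by (meson UNIV_I finite prod_zero)
  then show ?thesis using False by simp
qed

definition addf :: "('n \<Rightarrow> nat) \<Rightarrow> ('n \<Rightarrow> nat) \<Rightarrow> ('n \<Rightarrow> nat)" where
  "addf \<alpha> \<beta> = (\<lambda>i. \<alpha> i + \<beta> i)"

lemma mnm_addf: "mnm p x (addf \<alpha> \<beta>) = mnm p x \<alpha> * mnm p x \<beta>"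
  by (simp add: mnm_def addf_def power_add prod.distrib)

lemma mdeg_addf: "mdeg (addf \<alpha> \<beta>) = mdeg \<alpha> + mdeg \<beta>"
  by (simp add: mdeg_def addf_def sum.distrib)

definition fib :: "('n \<Rightarrow> nat) \<Rightarrow> (('n \<Rightarrow> nat) \<times> ('n \<Rightarrow> nat)) set" where
  "fib \<gamma> = {(\<alpha>,\<beta>). addf \<alpha> \<beta> = \<gamma>}"

lemma finite_fib: "finite (fib (\<gamma>::'n::finite \<Rightarrow> nat))"
proof -
  have fin: "finite (PiE UNIV (\<lambda>i::'n. {..\<gamma> i}))" by (rule finite_PiE) auto
  have "fib \<gamma> \<subseteq> PiE UNIV (\<lambda>i. {..\<gamma> i}) \<times> PiE UNIV (\<lambda>i. {..\<gamma> i})"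
    by (auto simp: fib_def addf_def PiE_UNIV_domain)
  then show ?thesis using fin by (meson finite_SigmaI finite_subset)
qed

lemma has_sum_fib:
  fixes F :: "('n::finite \<Rightarrow> nat) \<times> ('n \<Rightarrow> nat) \<Rightarrow> real"
  assumes "(F has_sum S) UNIV"
  shows "((\<lambda>\<gamma>. \<Sum>q\<in>fib \<gamma>. F q) has_sum S) UNIV"
proof -
  let ?g = "\<lambda>q. (addf (fst q) (snd q), q)"
  have bij: "bij_betw ?g UNIV (Sigma UNIV fib)"
    by (rule bij_betwI[where g=snd]) (auto simp: fib_def)
  have "((\<lambda>q. (F \<circ> snd) (?g q)) has_sum S) UNIV" using assms by simp
  then have "((F \<circ> snd) has_sum S) (Sigma UNIV fib)"
    using has_sum_reindex_bij_betw[OF bij] by blast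
  then show ?thesis
    by (rule has_sum_Sigma') (simp add: finite_fib)
qed

lemma has_sum_pairs:
  fixes f :: "'a \<Rightarrow> real" and g :: "'b \<Rightarrow> real"
  assumes "(f has_sum F) A" "(\<lambda>a. norm (f a)) summable_on A" "(g has_sum G) B" "(\<lambda>b. norm (g b)) summable_on B"
  shows "((\<lambda>(a,b). f a * g b) has_sum F * G) (A \<times> B)"
    and "(\<lambda>(a,b). norm (f a * g b)) summable_on (A \<times> B)"
proof -
  let ?h = "\<lambda>q. f (fst q) * g (snd q)"
  have ig: "infsum (\<lambda>b. norm (?h (a, b))) B = norm (f a) * infsum (\<lambda>b. norm (g b)) B" for a
    by (simp add: abs_mult infsum_cmult_right')
  have i1: "\<forall>a\<in>A. (\<lambda>b. norm (?h (a, b))) summable_on B"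
      using assms(4) by (simp add: abs_mult summable_on_cmult_right)
  have i2: "(\<lambda>a. norm (infsum (\<lambda>b. norm (?h (a, b))) B)) summable_on A"
  proof -
    have "infsum (\<lambda>b. norm (g b)) B \<ge> 0" by (rule infsum_nonneg) simp
    then show ?thesis
      unfolding ig using assms(2) by (simp add: summable_on_cmult_left abs_mult)
  qed
  have absS: "(\<lambda>q. norm (?h q)) summable_on Sigma A (\<lambda>_. B)"
    using Infinite_Sum.abs_summable_on_Sigma_iff[where f="?h" and A=A and B="\<lambda>_. B"] i1 i2 by blast
  then show abs: "(\<lambda>(a,b). norm (f a * g b)) summable_on (A \<times> B)" by (simp add: case_prod_unfold)
  have "(?h has_sum F * G) (Sigma A (\<lambda>_. B))"
  proof (rule has_sum_SigmaI[where g="\<lambda>a. f a * G"])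
    fix a show "((\<lambda>b. ?h (a, b)) has_sum f a * G) B"
      using has_sum_cmult_right[OF assms(3)] by simp
  next
    show "((\<lambda>a. f a * G) has_sum F * G) A" by (rule has_sum_cmult_left[OF assms(1)])
  next
    show "?h summable_on Sigma A (\<lambda>_. B)"
      by (rule Infinite_Sum.abs_summable_summable[OF absS])
  qed
  then show "((\<lambda>(a,b). f a * g b) has_sum F * G) (A \<times> B)" by (simp add: case_prod_unfold)
qed


definition PS :: "real^'n \<Rightarrow> real \<Rightarrow> (('n \<Rightarrow> nat) \<Rightarrow> real) \<Rightarrow> (real^'n \<Rightarrow> real) \<Rightarrow> bool" where
  "PS p r c f \<longleftrightarrow> (\<lambda>\<alpha>. \<bar>c \<alpha>\<bar> * r ^ mdeg \<alpha>) summable_on UNIV \<and>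
      (\<forall>x\<in>ball p r. ((\<lambda>\<alpha>. mnm p x \<alpha> * c \<alpha>) has_sum f x) UNIV)"

definition nrm :: "(('n::finite \<Rightarrow> nat) \<Rightarrow> real) \<Rightarrow> real \<Rightarrow> real" where
  "nrm c r = infsum (\<lambda>\<alpha>. \<bar>c \<alpha>\<bar> * r ^ mdeg \<alpha>) UNIV"

lemma AN_iff: "AN p f \<longleftrightarrow> (\<exists>r>0. \<exists>c. PS p r c f)"
  by (simp add: AN_def PS_def)

lemma maj_summable:
  assumes "(\<lambda>\<alpha>. \<bar>c \<alpha>\<bar> * r ^ mdeg \<alpha>) summable_on UNIV" "dist p x \<le> r"
  shows "(\<lambda>\<alpha>. norm (mnm p x \<alpha> * c \<alpha>)) summable_on UNIV"
proof (rule Infinite_Sum.abs_summable_on_comparison_test'[OF assms(1)])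
  fix \<alpha>
  have "\<bar>mnm p x \<alpha>\<bar> \<le> r ^ mdeg \<alpha>" by (rule mnm_bound[OF assms(2)])
  then show "norm (mnm p x \<alpha> * c \<alpha>) \<le> \<bar>c \<alpha>\<bar> * r ^ mdeg \<alpha>"
    by (simp add: abs_mult mult.commute mult_left_mono)
qed

lemma PS_mono:
  assumes "PS p r c f" "0 \<le> s" "s \<le> r"
  shows "PS p s c f"
  unfolding PS_def
proof (intro conjI)
  show "(\<lambda>\<alpha>. \<bar>c \<alpha>\<bar> * s ^ mdeg \<alpha>) summable_on UNIV"
    by (rule summable_on_comparison_test[where f="\<lambda>\<alpha>. \<bar>c \<alpha>\<bar> * r ^ mdeg \<alpha>"])
       (use assms in \<open>auto simp: PS_def intro!: mult_left_mono power_mono\<close>)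
  show "\<forall>x\<in>ball p s. ((\<lambda>\<alpha>. mnm p x \<alpha> * c \<alpha>) has_sum f x) UNIV"
    using assms by (auto simp: PS_def)
qed

lemma PS_value:
  assumes "PS p r c f" "r > 0"
  shows "f p = c (\<lambda>_. 0)"
proof -
  have "((\<lambda>\<alpha>. mnm p p \<alpha> * c \<alpha>) has_sum f p) UNIV" using assms by (auto simp: PS_def)
  moreover have "((\<lambda>\<alpha>. mnm p p \<alpha> * c \<alpha>) has_sum c (\<lambda>_. 0)) UNIV"
    by (rule has_sum_finite_neutralI[where B="{\<lambda>_. 0}"]) (auto simp: mnm_self)
  ultimately show ?thesis using has_sum_unique by blast
qed

definition kd :: "real \<Rightarrow> ('n \<Rightarrow> nat) \<Rightarrow> real" where
  "kd k \<alpha> = (if \<alpha> = (\<lambda>_. 0) then k else 0)"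

lemma mnm_zero[simp]: "mnm p x (\<lambda>_. 0) = 1" by (simp add: mnm_def)
lemma mdeg_zero[simp]: "mdeg (\<lambda>_. 0) = 0" by (simp add: mdeg_def)

lemma PS_const: "PS p r (kd k) (\<lambda>x. k)"
  unfolding PS_def
proof (intro conjI ballI)
  have "((\<lambda>\<alpha>. \<bar>kd k \<alpha>\<bar> * r ^ mdeg \<alpha>) has_sum \<bar>k\<bar>) UNIV"
    by (rule has_sum_finite_neutralI[where B="{\<lambda>_. 0}"]) (auto simp: kd_def)
  then show "(\<lambda>\<alpha>. \<bar>kd k \<alpha>\<bar> * r ^ mdeg \<alpha>) summable_on UNIV" by (rule has_sum_imp_summable)
  fix x show "((\<lambda>\<alpha>. mnm p x \<alpha> * kd k \<alpha>) has_sum k) UNIV"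
    by (rule has_sum_finite_neutralI[where B="{\<lambda>_. 0}"]) (auto simp: kd_def)
qed

lemma nrm_const: "nrm (kd k) r = \<bar>k\<bar>"
proof -
  have "((\<lambda>\<alpha>. \<bar>kd k \<alpha>\<bar> * r ^ mdeg \<alpha>) has_sum \<bar>k\<bar>) UNIV"
    by (rule has_sum_finite_neutralI[where B="{\<lambda>_. 0}"]) (auto simp: kd_def)
  then show ?thesis unfolding nrm_def by (rule infsumI)
qed

definition dlt :: "'n \<Rightarrow> ('n \<Rightarrow> nat)" where
  "dlt i = (\<lambda>j. if j = i then 1 else 0)"

lemma mnm_dlt: "mnm p x (dlt i) = x $ i - p $ i"
proof -
  have "mnm p x (dlt i) = (\<Prod>j\<in>UNIV. if j = i then x $ j - p $ j else 1)"
    unfolding mnm_def dlt_def by (rule prod.cong) auto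
  then show ?thesis by simp
qed

lemma dlt_nz: "dlt i \<noteq> (\<lambda>_. 0)"
  by (metis dlt_def zero_neq_one)

lemma PS_coord: "PS p r (\<lambda>\<alpha>. if \<alpha> = (\<lambda>_. 0) then p $ i else if \<alpha> = dlt i then 1 else 0) (\<lambda>x. x $ i)"
  unfolding PS_def
proof (intro conjI ballI)
  have "((\<lambda>\<alpha>. \<bar>if \<alpha> = (\<lambda>_. 0) then p $ i else if \<alpha> = dlt i then 1 else 0\<bar> * r ^ mdeg \<alpha>) has_sum
         (\<Sum>\<alpha>\<in>{\<lambda>_. 0, dlt i}. \<bar>if \<alpha> = (\<lambda>_. 0) then p $ i else if \<alpha> = dlt i then 1 else 0\<bar> * r ^ mdeg \<alpha>)) UNIV"
    by (rule has_sum_finite_neutralI) auto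
  then show "(\<lambda>\<alpha>. \<bar>if \<alpha> = (\<lambda>_. 0) then p $ i else if \<alpha> = dlt i then 1 else 0\<bar> * r ^ mdeg \<alpha>) summable_on UNIV"
    by (rule has_sum_imp_summable)
  fix x
  show "((\<lambda>\<alpha>. mnm p x \<alpha> * (if \<alpha> = (\<lambda>_. 0) then p $ i else if \<alpha> = dlt i then 1 else 0)) has_sum x $ i) UNIV"
    by (rule has_sum_finite_neutralI[where B="{\<lambda>_. 0, dlt i}"]) (auto simp: dlt_nz mnm_dlt dlt_nz[symmetric])
qed

lemma PS_add:
  assumes "PS p r c f" "PS p r d g" "0 \<le> r"
  shows "PS p r (\<lambda>\<alpha>. c \<alpha> + d \<alpha>) (\<lambda>x. f x + g x)"
  unfolding PS_def
proof (intro conjI ballI)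
  have "(\<lambda>\<alpha>. \<bar>c \<alpha>\<bar> * r ^ mdeg \<alpha> + \<bar>d \<alpha>\<bar> * r ^ mdeg \<alpha>) summable_on UNIV"
    using assms by (intro summable_on_add) (auto simp: PS_def)
  then show "(\<lambda>\<alpha>. \<bar>c \<alpha> + d \<alpha>\<bar> * r ^ mdeg \<alpha>) summable_on UNIV"
    by (rule summable_on_comparison_test) (use assms(3) in \<open>auto simp: algebra_simps intro!: mult_right_mono[where c="r ^ _", OF abs_triangle_ineq, simplified]\<close>)
  fix x assume "x \<in> ball p r"
  then show "((\<lambda>\<alpha>. mnm p x \<alpha> * (c \<alpha> + d \<alpha>)) has_sum f x + g x) UNIV"
    using assms by (auto simp: PS_def algebra_simps intro!: has_sum_add)
qed


definition cp :: "(('n \<Rightarrow> nat) \<Rightarrow> real) \<Rightarrow> (('n \<Rightarrow> nat) \<Rightarrow> real) \<Rightarrow> ('n \<Rightarrow> nat) \<Rightarrow> real" where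
  "cp c d \<gamma> = (\<Sum>q\<in>fib \<gamma>. c (fst q) * d (snd q))"

lemma fibD: "q \<in> fib \<gamma> \<Longrightarrow> \<gamma> = addf (fst q) (snd q)"
  by (auto simp: fib_def)

lemma PS_mult:
  fixes c d :: "('n::finite \<Rightarrow> nat) \<Rightarrow> real"
  assumes "PS p r c f" "PS p r d g" "0 \<le> r"
  shows "PS p r (cp c d) (\<lambda>x. f x * g x)" and "nrm (cp c d) r \<le> nrm c r * nrm d r"
proof -
  let ?C = "\<lambda>\<alpha>. \<bar>c \<alpha>\<bar> * r ^ mdeg \<alpha>" and ?D = "\<lambda>\<alpha>. \<bar>d \<alpha>\<bar> * r ^ mdeg \<alpha>"
  have sC: "?C summable_on UNIV" and sD: "?D summable_on UNIV" using assms by (auto simp: PS_def)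
  have nC: "(\<lambda>a. norm (?C a)) = ?C" and nD: "(\<lambda>a. norm (?D a)) = ?D"
    using assms(3) by (auto simp: abs_mult)
  have "((\<lambda>(a,b). ?C a * ?D b) has_sum nrm c r * nrm d r) (UNIV \<times> UNIV)"
    by (rule has_sum_pairs(1)) (use sC sD nC nD in \<open>auto simp: nrm_def\<close>)
  then have "((\<lambda>q. ?C (fst q) * ?D (snd q)) has_sum nrm c r * nrm d r) UNIV"
    by (simp add: case_prod_unfold)
  then have hF: "((\<lambda>\<gamma>. \<Sum>q\<in>fib \<gamma>. ?C (fst q) * ?D (snd q)) has_sum nrm c r * nrm d r) UNIV"
    by (rule has_sum_fib)
  have bnd: "\<bar>cp c d \<gamma>\<bar> * r ^ mdeg \<gamma> \<le> (\<Sum>q\<in>fib \<gamma>. ?C (fst q) * ?D (snd q))" for \<gamma>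
  proof -
    have "\<bar>cp c d \<gamma>\<bar> * r ^ mdeg \<gamma> \<le> (\<Sum>q\<in>fib \<gamma>. \<bar>c (fst q) * d (snd q)\<bar>) * r ^ mdeg \<gamma>"
      unfolding cp_def using assms(3) by (intro mult_right_mono sum_abs) auto
    also have "\<dots> = (\<Sum>q\<in>fib \<gamma>. \<bar>c (fst q) * d (snd q)\<bar> * r ^ mdeg \<gamma>)"
      by (simp add: sum_distrib_right)
    also have "\<dots> = (\<Sum>q\<in>fib \<gamma>. ?C (fst q) * ?D (snd q))"
    proof (rule sum.cong)
      fix q assume "q \<in> fib \<gamma>"
      then have "mdeg \<gamma> = mdeg (fst q) + mdeg (snd q)" by (metis fibD mdeg_addf)
      then show "\<bar>c (fst q) * d (snd q)\<bar> * r ^ mdeg \<gamma> = ?C (fst q) * ?D (snd q)"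
        by (simp add: abs_mult power_add)
    qed simp
    finally show ?thesis .
  qed
  have sP: "(\<lambda>\<gamma>. \<bar>cp c d \<gamma>\<bar> * r ^ mdeg \<gamma>) summable_on UNIV"
    by (rule summable_on_comparison_test[OF has_sum_imp_summable[OF hF]])
       (use bnd assms(3) in auto)
  show "nrm (cp c d) r \<le> nrm c r * nrm d r"
  proof -
    have "nrm (cp c d) r \<le> infsum (\<lambda>\<gamma>. \<Sum>q\<in>fib \<gamma>. ?C (fst q) * ?D (snd q)) UNIV"
      unfolding nrm_def by (rule infsum_mono[OF sP has_sum_imp_summable[OF hF]]) (rule bnd)
    also have "\<dots> = nrm c r * nrm d r" using hF by (rule infsumI)
    finally show ?thesis .
  qed
  show "PS p r (cp c d) (\<lambda>x. f x * g x)"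
    unfolding PS_def
  proof (intro conjI ballI sP)
    fix x assume x: "x \<in> ball p r"
    then have dx: "dist p x \<le> r" by simp
    have hf: "((\<lambda>\<alpha>. mnm p x \<alpha> * c \<alpha>) has_sum f x) UNIV" and hg: "((\<lambda>\<alpha>. mnm p x \<alpha> * d \<alpha>) has_sum g x) UNIV"
      using assms x by (auto simp: PS_def)
    have "((\<lambda>(a,b). (mnm p x a * c a) * (mnm p x b * d b)) has_sum f x * g x) (UNIV \<times> UNIV)"
      by (rule has_sum_pairs(1)[OF hf _ hg]) (use maj_summable assms dx in \<open>auto simp: PS_def\<close>)
    then have "((\<lambda>q. (mnm p x (fst q) * c (fst q)) * (mnm p x (snd q) * d (snd q))) has_sum f x * g x) UNIV"
      by (simp add: case_prod_unfold)
    then have h2: "((\<lambda>\<gamma>. \<Sum>q\<in>fib \<gamma>. (mnm p x (fst q) * c (fst q)) * (mnm p x (snd q) * d (snd q))) has_sum f x * g x) UNIV"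
      by (rule has_sum_fib)
    have "(\<Sum>q\<in>fib \<gamma>. (mnm p x (fst q) * c (fst q)) * (mnm p x (snd q) * d (snd q))) = mnm p x \<gamma> * cp c d \<gamma>" for \<gamma>
      unfolding cp_def sum_distrib_left
    proof (rule sum.cong)
      fix q assume "q \<in> fib \<gamma>"
      then have "\<gamma> = addf (fst q) (snd q)" by (rule fibD)
      then show "(mnm p x (fst q) * c (fst q)) * (mnm p x (snd q) * d (snd q)) = mnm p x \<gamma> * (c (fst q) * d (snd q))"
        by (simp add: mnm_addf)
    qed simp
    with h2 show "((\<lambda>\<alpha>. mnm p x \<alpha> * cp c d \<alpha>) has_sum f x * g x) UNIV" by simp
  qed
qed


primrec pw :: "(('n \<Rightarrow> nat) \<Rightarrow> real) \<Rightarrow> nat \<Rightarrow> ('n \<Rightarrow> nat) \<Rightarrow> real" where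
  "pw e 0 = kd 1"
| "pw e (Suc m) = cp e (pw e m)"

lemma nrm_nonneg: "0 \<le> r \<Longrightarrow> 0 \<le> nrm c r"
  unfolding nrm_def by (rule infsum_nonneg) auto

lemma mdeg_pos: "\<alpha> \<noteq> (\<lambda>_. 0) \<Longrightarrow> 1 \<le> mdeg (\<alpha> :: 'n::finite \<Rightarrow> nat)"
proof -
  assume "\<alpha> \<noteq> (\<lambda>_. 0)"
  then obtain i where "\<alpha> i \<noteq> 0" by auto
  then have "1 \<le> \<alpha> i" by simp
  also have "\<alpha> i \<le> mdeg \<alpha>" unfolding mdeg_def by (rule member_le_sum) auto
  finally show ?thesis .
qed

lemma has_sum_geom:
  fixes z :: real
  assumes "\<bar>z\<bar> < 1"
  shows "((\<lambda>m. z ^ m) has_sum 1 / (1 - z)) (UNIV :: nat set)"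
proof (rule norm_summable_imp_has_sum)
  show "summable (\<lambda>n. norm (z ^ n))" using assms by (simp add: power_abs summable_geometric)
  show "(\<lambda>m. z ^ m) sums (1 / (1 - z))" using assms by (simp add: geometric_sums)
qed

lemma PS_inverse:
  fixes c :: "('n::finite \<Rightarrow> nat) \<Rightarrow> real"
  assumes PSc: "PS p r c f" and r: "r > 0" and fp: "f p \<noteq> 0"
  shows "\<exists>s>0. \<exists>d. PS p s d (\<lambda>x. 1 / f x)"
proof -
  define a where "a = f p"
  have a0: "a \<noteq> 0" using fp by (simp add: a_def)
  have ca: "c (\<lambda>_. 0) = a" using PS_value[OF PSc r] by (simp add: a_def)
  define e where "e \<alpha> = (if \<alpha> = (\<lambda>_. 0) then 0 else - c \<alpha> / a)" for \<alpha>
  define k where "k x = 1 - f x / a" for x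
  have PSe: "PS p r e k"
    unfolding PS_def
  proof (intro conjI ballI)
    have "(\<lambda>\<alpha>. \<bar>c \<alpha>\<bar> * r ^ mdeg \<alpha> * (1 / \<bar>a\<bar>)) summable_on UNIV"
      using PSc by (intro summable_on_cmult_left) (simp add: PS_def)
    then show "(\<lambda>\<alpha>. \<bar>e \<alpha>\<bar> * r ^ mdeg \<alpha>) summable_on UNIV"
      by (rule summable_on_comparison_test) (use r in \<open>auto simp: e_def abs_div\<close>)
    fix x assume x: "x \<in> ball p r"
    have h1: "((\<lambda>\<alpha>. mnm p x \<alpha> * c \<alpha> * (- 1 / a)) has_sum f x * (- 1 / a)) UNIV"
      using PSc x by (intro has_sum_cmult_left) (simp add: PS_def)
    have h2: "((\<lambda>\<alpha>. mnm p x \<alpha> * kd 1 \<alpha>) has_sum 1) UNIV"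
      using PS_const[of p r 1] x by (simp add: PS_def)
    have "((\<lambda>\<alpha>. mnm p x \<alpha> * c \<alpha> * (- 1 / a) + mnm p x \<alpha> * kd 1 \<alpha>) has_sum f x * (- 1 / a) + 1) UNIV"
      by (rule has_sum_add[OF h1 h2])
    moreover have "mnm p x \<alpha> * c \<alpha> * (- 1 / a) + mnm p x \<alpha> * kd 1 \<alpha> = mnm p x \<alpha> * e \<alpha>" for \<alpha>
      using a0 ca by (auto simp: e_def kd_def)
    moreover have "f x * (- 1 / a) + 1 = k x" by (simp add: k_def)
    ultimately show "((\<lambda>\<alpha>. mnm p x \<alpha> * e \<alpha>) has_sum k x) UNIV" by simp
  qed
  define E where "E = nrm e r"
  have E0: "0 \<le> E" unfolding E_def using r by (simp add: nrm_nonneg)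
  define s where "s = r / (2 * (E + 1))"
  have s0: "0 < s" using r E0 by (simp add: s_def)
  have sr: "s \<le> r" using r E0 by (simp add: s_def field_simps)
  define \<theta> where "\<theta> = nrm e s"
  have PSes: "PS p s e k" by (rule PS_mono[OF PSe]) (use s0 sr in auto)
  have sumEr: "(\<lambda>\<alpha>. \<bar>e \<alpha>\<bar> * r ^ mdeg \<alpha>) summable_on UNIV" using PSe by (simp add: PS_def)
  have sumEs: "(\<lambda>\<alpha>. \<bar>e \<alpha>\<bar> * s ^ mdeg \<alpha>) summable_on UNIV" using PSes by (simp add: PS_def)
  have th0: "0 \<le> \<theta>" unfolding \<theta>_def using s0 by (simp add: nrm_nonneg)
  have th: "\<theta> \<le> 1 / 2"
  proof -
    have pt: "\<bar>e \<alpha>\<bar> * s ^ mdeg \<alpha> \<le> (s / r) * (\<bar>e \<alpha>\<bar> * r ^ mdeg \<alpha>)" for \<alpha>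
    proof (cases "\<alpha> = (\<lambda>_. 0)")
      case True then show ?thesis by (simp add: e_def)
    next
      case False
      then have d1: "1 \<le> mdeg \<alpha>" by (rule mdeg_pos)
      have q: "0 \<le> s / r" "s / r \<le> 1" using s0 sr r by auto
      have "s ^ mdeg \<alpha> = (s / r) ^ mdeg \<alpha> * r ^ mdeg \<alpha>" using r by (simp add: power_divide)
      also have "\<dots> \<le> (s / r) ^ 1 * r ^ mdeg \<alpha>"
        by (rule mult_right_mono[OF power_decreasing[OF d1 q]]) (use r in simp)
      finally have "s ^ mdeg \<alpha> \<le> (s / r) * r ^ mdeg \<alpha>" by simp
      then have "\<bar>e \<alpha>\<bar> * s ^ mdeg \<alpha> \<le> \<bar>e \<alpha>\<bar> * ((s / r) * r ^ mdeg \<alpha>)" by (rule mult_left_mono) simp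
      then show ?thesis by (simp only: ac_simps)
    qed
    have "\<theta> \<le> infsum (\<lambda>\<alpha>. (s / r) * (\<bar>e \<alpha>\<bar> * r ^ mdeg \<alpha>)) UNIV"
      unfolding \<theta>_def nrm_def
      by (rule infsum_mono[OF sumEs summable_on_cmult_right[OF sumEr]]) (rule pt)
    also have "\<dots> = (s / r) * E" unfolding E_def nrm_def by (rule infsum_cmult_right')
    also have "\<dots> = E / (2 * (E + 1))"
    proof -
      have "s / r = 1 / (2 * (E + 1))" using r E0 by (simp add: s_def)
      then show ?thesis by simp
    qed
    also have "\<dots> \<le> 1 / 2" using E0 by (simp add: field_simps)
    finally show ?thesis .
  qed
  have pwP: "PS p s (pw e m) (\<lambda>x. k x ^ m) \<and> nrm (pw e m) s \<le> \<theta> ^ m" for m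
  proof (induction m)
    case 0
    show ?case using PS_const[of p s 1] by (simp add: nrm_const)
  next
    case (Suc m)
    have A: "PS p s (cp e (pw e m)) (\<lambda>x. k x * k x ^ m)"
      by (rule PS_mult(1)[OF PSes Suc.IH[THEN conjunct1]]) (use s0 in simp)
    have "nrm (cp e (pw e m)) s \<le> \<theta> * nrm (pw e m) s"
      unfolding \<theta>_def by (rule PS_mult(2)[OF PSes Suc.IH[THEN conjunct1]]) (use s0 in simp)
    also have "\<dots> \<le> \<theta> * \<theta> ^ m" using Suc.IH th0 by (simp add: mult_left_mono)
    finally show ?case using A by simp
  qed
  have geo: "(\<lambda>m. \<theta> ^ m) summable_on (UNIV :: nat set)"
    using th th0 by (intro summable_nonneg_imp_summable_on summable_geometric) auto
  define H where "H q = \<bar>pw e (fst q) (snd q)\<bar> * s ^ mdeg (snd q)" for q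
  have H0: "0 \<le> H q" for q using s0 by (simp add: H_def)
  have sH: "H summable_on (UNIV \<times> UNIV)"
  proof -
    have i1: "\<forall>m\<in>UNIV. (\<lambda>\<gamma>. norm (H (m, \<gamma>))) summable_on UNIV"
      using pwP s0 by (simp add: H_def PS_def abs_mult power_abs)
    have "(\<lambda>m. norm (infsum (\<lambda>\<gamma>. norm (H (m, \<gamma>))) UNIV)) summable_on UNIV"
    proof (rule summable_on_comparison_test[OF geo])
      fix m
      have "infsum (\<lambda>\<gamma>. norm (H (m, \<gamma>))) UNIV = nrm (pw e m) s"
        using s0 by (simp add: H_def nrm_def abs_mult power_abs)
      then show "norm (infsum (\<lambda>\<gamma>. norm (H (m, \<gamma>))) UNIV) \<le> \<theta> ^ m"
        using pwP[of m] s0 nrm_nonneg[of s "pw e m"] by simp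
    qed simp
    then have "(\<lambda>q. norm (H q)) summable_on Sigma UNIV (\<lambda>_. UNIV)"
      using Infinite_Sum.abs_summable_on_Sigma_iff[where f=H and A=UNIV and B="\<lambda>_. UNIV"] i1 by simp
    then show ?thesis using Infinite_Sum.abs_summable_summable by fastforce
  qed
  define P where "P \<gamma> = infsum (\<lambda>m. pw e m \<gamma>) UNIV" for \<gamma>
  define d where "d \<gamma> = P \<gamma> / a" for \<gamma>
  have sHsw: "(\<lambda>(\<gamma>, m). H (m, \<gamma>)) summable_on (UNIV \<times> UNIV)"
    using sH summable_on_swap[of H UNIV UNIV] by simp
  have slice: "(\<lambda>m. H (m, \<gamma>)) summable_on UNIV" for \<gamma>
    using summable_on_SigmaD1[of "\<lambda>\<gamma> m. H (m, \<gamma>)" UNIV "\<lambda>_. UNIV" \<gamma>] sHsw by simp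
  have sd: "(\<lambda>\<gamma>. \<bar>d \<gamma>\<bar> * s ^ mdeg \<gamma>) summable_on UNIV"
  proof -
    have "(\<lambda>\<gamma>. infsum (\<lambda>m. H (m, \<gamma>)) UNIV) summable_on UNIV"
      using summable_on_Sigma_banach[of "\<lambda>\<gamma> m. H (m, \<gamma>)" UNIV "\<lambda>_. UNIV"] sHsw by simp
    then have "(\<lambda>\<gamma>. infsum (\<lambda>m. H (m, \<gamma>)) UNIV * (1 / \<bar>a\<bar>)) summable_on UNIV"
      by (rule summable_on_cmult_left)
    then show ?thesis
    proof (rule summable_on_comparison_test)
      fix \<gamma>
      have sp: "(\<lambda>m. \<bar>pw e m \<gamma>\<bar>) summable_on UNIV"
      proof -
        have "(\<lambda>m. \<bar>pw e m \<gamma>\<bar> * s ^ mdeg \<gamma>) summable_on UNIV" using slice[of \<gamma>] by (simp add: H_def)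
        then show ?thesis using summable_on_cmult_left'[of "s ^ mdeg \<gamma>" "\<lambda>m. \<bar>pw e m \<gamma>\<bar>"] s0 by simp
      qed
      have "\<bar>P \<gamma>\<bar> \<le> infsum (\<lambda>m. \<bar>pw e m \<gamma>\<bar>) UNIV"
        unfolding P_def using norm_infsum_bound[of "\<lambda>m. pw e m \<gamma>" UNIV] sp by simp
      then have "\<bar>P \<gamma>\<bar> * s ^ mdeg \<gamma> \<le> infsum (\<lambda>m. \<bar>pw e m \<gamma>\<bar>) UNIV * s ^ mdeg \<gamma>"
        using s0 by (simp add: mult_right_mono)
      also have "\<dots> = infsum (\<lambda>m. H (m, \<gamma>)) UNIV" by (simp add: H_def infsum_cmult_left')
      finally show "\<bar>d \<gamma>\<bar> * s ^ mdeg \<gamma> \<le> infsum (\<lambda>m. H (m, \<gamma>)) UNIV * (1 / \<bar>a\<bar>)"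
        using a0 by (simp add: d_def abs_div divide_right_mono)
    qed (use s0 in simp)
  qed
  have "PS p s d (\<lambda>x. 1 / f x)"
    unfolding PS_def
  proof (intro conjI ballI sd)
    fix x assume x: "x \<in> ball p s"
    then have dx: "dist p x \<le> s" by simp
    have kx: "\<bar>k x\<bar> \<le> \<theta>"
    proof -
      have hk: "((\<lambda>\<alpha>. mnm p x \<alpha> * e \<alpha>) has_sum k x) UNIV" using PSes x by (simp add: PS_def)
      have ht: "((\<lambda>\<alpha>. \<bar>e \<alpha>\<bar> * s ^ mdeg \<alpha>) has_sum \<theta>) UNIV"
        unfolding \<theta>_def nrm_def using sumEs by (rule has_sum_infsum)
      show ?thesis
      proof (rule norm_infsum_le[OF hk ht, simplified])
        fix \<alpha>
        have "\<bar>mnm p x \<alpha>\<bar> \<le> s ^ mdeg \<alpha>" by (rule mnm_bound[OF dx])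
        then show "\<bar>mnm p x \<alpha> * e \<alpha>\<bar> \<le> \<bar>e \<alpha>\<bar> * s ^ mdeg \<alpha>"
          by (simp add: abs_mult mult.commute mult_left_mono)
      qed
    qed
    then have kx1: "\<bar>k x\<bar> < 1" using th by simp
    define G where "G q = mnm p x (snd q) * pw e (fst q) (snd q)" for q
    have GH: "norm (G q) \<le> H q" for q
    proof -
      have "\<bar>mnm p x (snd q)\<bar> \<le> s ^ mdeg (snd q)" by (rule mnm_bound[OF dx])
      then show ?thesis by (simp add: G_def H_def abs_mult mult.commute mult_right_mono)
    qed
    have sG: "G summable_on (UNIV \<times> UNIV)"
    proof -
      have "(\<lambda>q. norm (G q)) summable_on (UNIV \<times> UNIV)"
        by (rule Infinite_Sum.abs_summable_on_comparison_test'[OF sH GH])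
      then show ?thesis using Infinite_Sum.abs_summable_summable by fastforce
    qed
    have hG: "(G has_sum 1 / (1 - k x)) (Sigma UNIV (\<lambda>_. UNIV))"
    proof (rule has_sum_SigmaI[where g="\<lambda>m. k x ^ m"])
      fix m :: nat
      show "((\<lambda>\<gamma>. G (m, \<gamma>)) has_sum k x ^ m) UNIV"
        using pwP[of m] x by (simp add: PS_def G_def)
    next
      show "((\<lambda>m. k x ^ m) has_sum 1 / (1 - k x)) UNIV" by (rule has_sum_geom[OF kx1])
    next
      show "G summable_on Sigma UNIV (\<lambda>_. UNIV)" using sG by simp
    qed
    then have hGs: "((\<lambda>(\<gamma>, m). G (m, \<gamma>)) has_sum 1 / (1 - k x)) (Sigma UNIV (\<lambda>_. UNIV))"
      using has_sum_swap[where f=G and S="1 / (1 - k x)" and A=UNIV and B=UNIV] by simp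
    have inner: "((\<lambda>m. (\<lambda>(\<gamma>, m). G (m, \<gamma>)) (\<gamma>, m)) has_sum mnm p x \<gamma> * P \<gamma>) UNIV" for \<gamma>
    proof -
      have "(\<lambda>m. G (m, \<gamma>)) summable_on UNIV"
        using summable_on_SigmaD1[of "\<lambda>\<gamma> m. G (m, \<gamma>)" UNIV "\<lambda>_. UNIV" \<gamma>]
              has_sum_imp_summable[OF hGs] by simp
      then have "((\<lambda>m. G (m, \<gamma>)) has_sum infsum (\<lambda>m. G (m, \<gamma>)) UNIV) UNIV" by (rule has_sum_infsum)
      moreover have "infsum (\<lambda>m. G (m, \<gamma>)) UNIV = mnm p x \<gamma> * P \<gamma>"
        by (simp add: G_def P_def infsum_cmult_right')
      ultimately show ?thesis by simp
    qed
    have "((\<lambda>\<gamma>. mnm p x \<gamma> * P \<gamma>) has_sum 1 / (1 - k x)) UNIV"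
      by (rule has_sum_Sigma'[OF hGs inner])
    then have "((\<lambda>\<gamma>. mnm p x \<gamma> * P \<gamma> * (1 / a)) has_sum 1 / (1 - k x) * (1 / a)) UNIV"
      by (rule has_sum_cmult_left)
    moreover have "1 / (1 - k x) * (1 / a) = 1 / f x" using a0 by (simp add: k_def field_simps)
    ultimately show "((\<lambda>\<gamma>. mnm p x \<gamma> * d \<gamma>) has_sum 1 / f x) UNIV" by (simp add: d_def)
  qed
  then show ?thesis using s0 by blast
qed


lemma AN_const: "AN p (\<lambda>x. k)"
  unfolding AN_iff using PS_const[of p 1 k] by (intro exI[of _ 1]) auto

lemma AN_coord: "AN p (\<lambda>x. x $ i)"
  unfolding AN_iff using PS_coord[of p 1 i] by (intro exI[of _ 1]) auto

lemma AN_common: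
  assumes "AN p f" "AN p g"
  obtains r c d where "r > 0" "PS p r c f" "PS p r d g"
proof -
  obtain r1 c where r1: "r1 > 0" "PS p r1 c f" using assms(1) by (auto simp: AN_iff)
  obtain r2 d where r2: "r2 > 0" "PS p r2 d g" using assms(2) by (auto simp: AN_iff)
  have "PS p (min r1 r2) c f" by (rule PS_mono[OF r1(2)]) (use r1 r2 in auto)
  moreover have "PS p (min r1 r2) d g" by (rule PS_mono[OF r2(2)]) (use r1 r2 in auto)
  ultimately show ?thesis using that[of "min r1 r2"] r1 r2 by auto
qed

lemma AN_add: "AN p f \<Longrightarrow> AN p g \<Longrightarrow> AN p (\<lambda>x. f x + g x)"
proof -
  assume "AN p f" "AN p g"
  then obtain r c d where "r > 0" "PS p r c f" "PS p r d g" by (rule AN_common)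
  then show ?thesis unfolding AN_iff by (intro exI[of _ r] conjI exI) (auto intro!: PS_add)
qed

lemma AN_mult: "AN p f \<Longrightarrow> AN p g \<Longrightarrow> AN p (\<lambda>x. f x * g x)"
proof -
  assume "AN p f" "AN p g"
  then obtain r c d where "r > 0" "PS p r c f" "PS p r d g" by (rule AN_common)
  then show ?thesis unfolding AN_iff by (intro exI[of _ r] conjI exI) (auto intro!: PS_mult(1))
qed

lemma AN_inverse: "AN p f \<Longrightarrow> f p \<noteq> 0 \<Longrightarrow> AN p (\<lambda>x. 1 / f x)"
  unfolding AN_iff using PS_inverse by blast

lemma AN_cmult: "AN p f \<Longrightarrow> AN p (\<lambda>x. k * f x)"
  using AN_mult[OF AN_const] by blast

lemma AN_minus: "AN p f \<Longrightarrow> AN p (\<lambda>x. - f x)"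
  using AN_cmult[of p f "-1"] by simp

lemma AN_diff: "AN p f \<Longrightarrow> AN p g \<Longrightarrow> AN p (\<lambda>x. f x - g x)"
  using AN_add[OF _ AN_minus, of p f g] by simp

lemma AN_divide: "AN p f \<Longrightarrow> AN p g \<Longrightarrow> g p \<noteq> 0 \<Longrightarrow> AN p (\<lambda>x. f x / g x)"
  using AN_mult[OF _ AN_inverse, of p f g] by simp



lemma AN_sum: "finite S \<Longrightarrow> (\<And>j. j \<in> S \<Longrightarrow> AN p (f j)) \<Longrightarrow> AN p (\<lambda>x. \<Sum>j\<in>S. f j x)"
proof (induction S rule: finite_induct)
  case empty then show ?case using AN_const[of p 0] by simp
next
  case (insert a S) then show ?case by (simp add: AN_add)
qed

lemma linear_coords:
  fixes l :: "real^'n \<Rightarrow> real"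
  assumes "linear l"
  shows "l x = (\<Sum>i\<in>UNIV. x $ i * l (axis i 1))"
proof -
  have "x = (\<Sum>i\<in>UNIV. x $ i *\<^sub>R axis i 1)"
    using basis_expansion[of x] by (simp add: scalar_mult_eq_scaleR)
  then have "l x = l (\<Sum>i\<in>UNIV. x $ i *\<^sub>R axis i 1)" by simp
  also have "\<dots> = (\<Sum>i\<in>UNIV. x $ i * l (axis i 1))"
    using assms by (simp add: linear_sum linear_scale)
  finally show ?thesis .
qed

lemma AN_linear: "linear (l :: real^'n \<Rightarrow> real) \<Longrightarrow> AN p l"
proof -
  assume l: "linear l"
  have "AN p (\<lambda>x. \<Sum>i\<in>UNIV. x $ i * l (axis i 1))"
  proof (rule AN_sum)
    fix i show "AN p (\<lambda>x. x $ i * l (axis i 1))" by (rule AN_mult[OF AN_coord AN_const])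
  qed simp
  moreover have "(\<lambda>x. \<Sum>i\<in>UNIV. x $ i * l (axis i 1)) = l"
    by (rule ext) (rule linear_coords[OF l, symmetric])
  ultimately show ?thesis by simp
qed

lemma has_sum_sum_fin:
  fixes f :: "'j \<Rightarrow> 'a \<Rightarrow> 'b::{topological_comm_monoid_add}"
  shows "finite S \<Longrightarrow> (\<And>j. j \<in> S \<Longrightarrow> (f j has_sum F j) A) \<Longrightarrow> ((\<lambda>a. \<Sum>j\<in>S. f j a) has_sum (\<Sum>j\<in>S. F j)) A"
proof (induction S rule: finite_induct)
  case empty then show ?case by simp
next
  case (insert a S) then show ?case by (simp add: has_sum_add)
qed

lemma vec_expand: "(x :: real^'m) = (\<Sum>j\<in>UNIV. x $ j *\<^sub>R axis j 1)"
  using basis_expansion[of x] by (simp add: scalar_mult_eq_scaleR)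

lemma sum_axis_component: "(\<Sum>j\<in>UNIV. g j *\<^sub>R (axis j 1 :: real^'m)) $ i = g i"
proof -
  have "(\<Sum>j\<in>UNIV. g j *\<^sub>R (axis j 1 :: real^'m)) $ i = (\<Sum>j\<in>UNIV. g j * (axis j 1 :: real^'m) $ i)"
    by (simp add: sum_component)
  also have "\<dots> = (\<Sum>j\<in>UNIV. if j = i then g j else 0)"
    by (rule sum.cong) (auto simp: axis_def)
  also have "\<dots> = g i" by simp
  finally show ?thesis .
qed


lemma real_analytic_onI:
  fixes f :: "real^'n \<Rightarrow> real^'m"
  assumes "\<And>p j. p \<in> U \<Longrightarrow> AN p (\<lambda>x. f x $ j)"
  shows "real_analytic_on f U"
  unfolding real_analytic_on_def
proof
  fix p assume p: "p \<in> U"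
  have "\<forall>j. \<exists>r c. r > 0 \<and> PS p r c (\<lambda>x. f x $ j)" using assms[OF p] by (auto simp: AN_iff)
  then obtain R C where RC: "\<And>j. R j > 0" "\<And>j. PS p (R j) (C j) (\<lambda>x. f x $ j)" by metis
  define r where "r = Min (range R)"
  have r0: "r > 0" unfolding r_def using RC(1) by (subst Min_gr_iff) auto
  have rR: "r \<le> R j" for j unfolding r_def by (rule Min_le) auto
  have PSj: "PS p r (C j) (\<lambda>x. f x $ j)" for j by (rule PS_mono[OF RC(2)]) (use r0 rR in auto)
  define cv where "cv \<alpha> = (\<chi> j. C j \<alpha>)" for \<alpha>
  show "\<exists>r>0. \<exists>c :: ('n \<Rightarrow> nat) \<Rightarrow> real^'m. \<forall>x\<in>ball p r.
          ((\<lambda>\<alpha>. (\<Prod>i\<in>UNIV. (x $ i - p $ i) ^ \<alpha> i) *\<^sub>R c \<alpha>) has_sum f x) UNIV"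
  proof (intro exI conjI ballI)
    show "r > 0" by (rule r0)
    fix x assume x: "x \<in> ball p r"
    have h: "((\<lambda>\<alpha>. \<Sum>j\<in>UNIV. (mnm p x \<alpha> * C j \<alpha>) *\<^sub>R (axis j 1 :: real^'m)) has_sum (\<Sum>j\<in>UNIV. f x $ j *\<^sub>R axis j 1)) UNIV"
    proof (rule has_sum_sum_fin)
      fix j :: 'm
      have "((\<lambda>\<alpha>. mnm p x \<alpha> * C j \<alpha>) has_sum f x $ j) UNIV" using PSj[of j] x by (simp add: PS_def)
      then show "((\<lambda>\<alpha>. (mnm p x \<alpha> * C j \<alpha>) *\<^sub>R (axis j 1 :: real^'m)) has_sum f x $ j *\<^sub>R axis j 1) UNIV"
        by (rule has_sum_bounded_linear[OF bounded_linear_scaleR_left, of _ _ _ "axis j 1"])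
    qed simp
    have e1: "(\<Sum>j\<in>UNIV. (mnm p x \<alpha> * C j \<alpha>) *\<^sub>R (axis j 1 :: real^'m)) = (\<Prod>i\<in>UNIV. (x $ i - p $ i) ^ \<alpha> i) *\<^sub>R cv \<alpha>" for \<alpha>
      unfolding vec_eq_iff sum_axis_component by (simp add: cv_def mnm_def)
    have e2: "(\<Sum>j\<in>UNIV. f x $ j *\<^sub>R (axis j 1 :: real^'m)) = f x"
      by (rule vec_expand[symmetric])
    show "((\<lambda>\<alpha>. (\<Prod>i\<in>UNIV. (x $ i - p $ i) ^ \<alpha> i) *\<^sub>R cv \<alpha>) has_sum f x) UNIV"
      using h unfolding e1 e2 .
  qed
qed



lemma bil_lin1: "bilinear h \<Longrightarrow> linear (\<lambda>u. h u w)"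
  by (simp add: bilinear_def)
lemma bil_lin2: "bilinear h \<Longrightarrow> linear (\<lambda>w. h u w)"
  by (simp add: bilinear_def)

lemma bil_expand:
  fixes h :: "real^'n \<Rightarrow> real^'n \<Rightarrow> real"
  assumes "bilinear h"
  shows "h u w = (\<Sum>i\<in>UNIV. \<Sum>j\<in>UNIV. u $ i * (w $ j * h (axis i 1) (axis j 1)))"
proof -
  have "h u w = (\<Sum>i\<in>UNIV. u $ i * h (axis i 1) w)"
    by (rule linear_coords[OF bil_lin1[OF assms]])
  also have "\<dots> = (\<Sum>i\<in>UNIV. u $ i * (\<Sum>j\<in>UNIV. w $ j * h (axis i 1) (axis j 1)))"
    using linear_coords[OF bil_lin2[OF assms]] by metis
  also have "\<dots> = (\<Sum>i\<in>UNIV. \<Sum>j\<in>UNIV. u $ i * (w $ j * h (axis i 1) (axis j 1)))"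
    by (simp add: sum_distrib_left)
  finally show ?thesis .
qed

lemma AN_bilin:
  fixes h :: "real^'n \<Rightarrow> real^'n \<Rightarrow> real" and u w :: "real^'m \<Rightarrow> real^'n"
  assumes "bilinear h" "\<And>i. AN p (\<lambda>x. u x $ i)" "\<And>i. AN p (\<lambda>x. w x $ i)"
  shows "AN p (\<lambda>x. h (u x) (w x))"
proof -
  have "AN p (\<lambda>x. \<Sum>i\<in>UNIV. \<Sum>j\<in>UNIV. u x $ i * (w x $ j * h (axis i 1) (axis j 1)))"
  proof (rule AN_sum)
    fix i show "AN p (\<lambda>x. \<Sum>j\<in>UNIV. u x $ i * (w x $ j * h (axis i 1) (axis j 1)))"
    proof (rule AN_sum)
      fix j show "AN p (\<lambda>x. u x $ i * (w x $ j * h (axis i 1) (axis j 1)))"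
        by (rule AN_mult[OF assms(2) AN_mult[OF assms(3) AN_const]])
    qed simp
  qed simp
  moreover have "(\<lambda>x. \<Sum>i\<in>UNIV. \<Sum>j\<in>UNIV. u x $ i * (w x $ j * h (axis i 1) (axis j 1))) = (\<lambda>x. h (u x) (w x))"
    by (rule ext) (rule bil_expand[OF assms(1), symmetric])
  ultimately show ?thesis by simp
qed

lemma linear_nth: "linear L \<Longrightarrow> linear (\<lambda>v. (L v :: real^'m) $ j)"
  unfolding linear_iff by (simp add: linear_add linear_scale)

lemma AN_lincomp:
  fixes L :: "real^'n \<Rightarrow> real^'m" and F :: "real^'k \<Rightarrow> real^'n"
  assumes "linear L" "\<And>i. AN p (\<lambda>x. F x $ i)"
  shows "AN p (\<lambda>x. L (F x) $ j)"
proof -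
  have "AN p (\<lambda>x. \<Sum>i\<in>UNIV. F x $ i * (L (axis i 1)) $ j)"
  proof (rule AN_sum)
    fix i show "AN p (\<lambda>x. F x $ i * (L (axis i 1)) $ j)" by (rule AN_mult[OF assms(2) AN_const])
  qed simp
  moreover have "(\<lambda>x. \<Sum>i\<in>UNIV. F x $ i * (L (axis i 1)) $ j) = (\<lambda>x. L (F x) $ j)"
    by (rule ext) (rule linear_coords[OF linear_nth[OF assms(1)], symmetric])
  ultimately show ?thesis by simp
qed

lemma AN_lin: "linear (L :: real^'n \<Rightarrow> real^'m) \<Longrightarrow> AN p (\<lambda>x. L x $ j)"
  using AN_lincomp[of L p "\<lambda>x. x"] AN_coord by blast

lemma cont_bilin:
  fixes h :: "real^'n \<Rightarrow> real^'n \<Rightarrow> real"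
  assumes "bilinear h" "continuous_on UNIV u" "continuous_on UNIV w"
  shows "continuous_on UNIV (\<lambda>x. h (u x) (w x))"
  using bounded_bilinear.continuous_on[OF bilinear_conv_bounded_bilinear[THEN iffD1, OF assms(1)] assms(2,3)] .

lemma cont_lin: "linear (L :: real^'n \<Rightarrow> 'b::real_normed_vector) \<Longrightarrow> continuous_on S L"
  by (simp add: linear_continuous_on linear_conv_bounded_linear)


locale quad =
  fixes \<beta> :: "real^'n \<Rightarrow> real^'n \<Rightarrow> real" and lz :: "real^'n \<Rightarrow> real" and Z :: "real^'n" and c0 :: real
  assumes \<beta>_bil: "bilinear \<beta>" and \<beta>_sym: "\<And>x y. \<beta> x y = \<beta> y x" and \<beta>Z: "\<And>x. \<beta> Z x = 0"
    and lz_lin: "linear lz" and lzZ: "lz Z = 1" and c0: "c0 \<noteq> 0"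
begin

lemma \<beta>L: "\<beta> (x + y) z = \<beta> x z + \<beta> y z" "\<beta> (x - y) z = \<beta> x z - \<beta> y z"
  "\<beta> (a *\<^sub>R x) z = a * \<beta> x z" "\<beta> (- x) z = - \<beta> x z" "\<beta> 0 z = 0"
  using \<beta>_bil by (simp_all add: bilinear_ladd bilinear_lsub bilinear_lmul bilinear_lneg bilinear_lzero)

lemma \<beta>R: "\<beta> z (x + y) = \<beta> z x + \<beta> z y" "\<beta> z (x - y) = \<beta> z x - \<beta> z y"
  "\<beta> z (a *\<^sub>R x) = a * \<beta> z x" "\<beta> z (- x) = - \<beta> z x" "\<beta> z 0 = 0"
  using \<beta>_bil by (simp_all add: bilinear_radd bilinear_rsub bilinear_rmul bilinear_rneg bilinear_rzero)

lemma \<beta>Zr: "\<beta> x Z = 0" using \<beta>Z \<beta>_sym by metis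

lemma lzs: "lz (x + y) = lz x + lz y" "lz (x - y) = lz x - lz y" "lz (a *\<^sub>R x) = a * lz x"
  "lz (- x) = - lz x" "lz 0 = 0"
  using lz_lin by (simp_all add: linear_add linear_diff linear_scale linear_neg linear_0)

lemmas alg = \<beta>L \<beta>R \<beta>Z \<beta>Zr lzs lzZ

definition "SS = {x. lz x = 0 \<and> \<beta> x x = c0}"
definition "Pv x = x - lz x *\<^sub>R Z"
definition "mm p x = \<beta> p x + c0"
definition "QQ p x = \<beta> (x + p) (x + p)"
definition "sg p x = mm p x / c0 - 2 * (mm p x)\<^sup>2 / (c0 * QQ p x)"
definition "Phi p x = (c0 / mm p x) *\<^sub>R (Pv x + p) - p + sg p x *\<^sub>R p + lz x *\<^sub>R Z"
definition "sy p y = \<beta> p y / c0"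
definition "wy p y = Pv y - sy p y *\<^sub>R p"
definition "qy p y = \<beta> (wy p y + p) (wy p y + p)"
definition "mu p y = sy p y + 2 * c0 / qy p y"
definition "Psi p y = mu p y *\<^sub>R (wy p y + p) - p + lz y *\<^sub>R Z"
definition "D1 p = {x. mm p x \<noteq> 0 \<and> QQ p x \<noteq> 0}"
definition "D2 p = {y. qy p y \<noteq> 0 \<and> sy p y * qy p y + 2 * c0 \<noteq> 0}"

lemma sq_aux: "\<beta> (a *\<^sub>R v + b *\<^sub>R Z) (a *\<^sub>R v + b *\<^sub>R Z) = a\<^sup>2 * \<beta> v v"
  by (simp add: alg power2_eq_square)

lemma lz_Pv: "lz (Pv x) = 0" by (simp add: Pv_def alg)
lemma \<beta>_Pv: "\<beta> (Pv x) y = \<beta> x y" "\<beta> y (Pv x) = \<beta> y x" by (simp_all add: Pv_def alg)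
lemma Pv_add: "Pv x + lz x *\<^sub>R Z = x" by (simp add: Pv_def)

context
  fixes p assumes lzp: "lz p = 0" and \<beta>p: "\<beta> p p = c0"
begin

lemma sg_alt: "QQ p x \<noteq> 0 \<Longrightarrow> sg p x = mm p x * (\<beta> x x - c0) / (c0 * QQ p x)"
proof -
  assume Q: "QQ p x \<noteq> 0"
  have "QQ p x = \<beta> x x + 2 * \<beta> p x + c0" using \<beta>p by (simp add: QQ_def alg \<beta>_sym[of x p])
  then have e: "\<beta> x x - c0 = QQ p x - 2 * mm p x" by (simp add: mm_def)
  show ?thesis unfolding sg_def e using Q c0 by (simp add: field_simps power2_eq_square)
qed

lemma lz_Phi: "lz (Phi p x) = lz x"
  using lzp by (simp add: Phi_def alg lz_Pv)

lemma \<beta>p_Phi: "x \<in> D1 p \<Longrightarrow> \<beta> p (Phi p x) = sg p x * c0"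
proof -
  assume x: "x \<in> D1 p"
  then have m: "mm p x \<noteq> 0" by (simp add: D1_def)
  have "\<beta> p (Phi p x) = (c0 / mm p x) * mm p x - c0 + sg p x * c0"
    using \<beta>p by (simp add: Phi_def alg \<beta>_Pv mm_def)
  then show ?thesis using m by simp
qed

lemma sy_Phi: "x \<in> D1 p \<Longrightarrow> sy p (Phi p x) = sg p x"
  using \<beta>p_Phi c0 by (simp add: sy_def)

lemma wy_Phi: "x \<in> D1 p \<Longrightarrow> wy p (Phi p x) = (c0 / mm p x) *\<^sub>R (Pv x + p) - p"
proof -
  assume x: "x \<in> D1 p"
  have "Pv (Phi p x) = Phi p x - lz x *\<^sub>R Z" by (simp add: Pv_def lz_Phi)
  then show ?thesis using sy_Phi[OF x] by (simp add: wy_def Phi_def)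
qed

lemma qy_Phi: "x \<in> D1 p \<Longrightarrow> qy p (Phi p x) = (c0 / mm p x)\<^sup>2 * QQ p x"
proof -
  assume x: "x \<in> D1 p"
  have "qy p (Phi p x) = \<beta> ((c0 / mm p x) *\<^sub>R (Pv x + p)) ((c0 / mm p x) *\<^sub>R (Pv x + p))"
    by (simp add: qy_def wy_Phi[OF x])
  also have "\<dots> = (c0 / mm p x)\<^sup>2 * \<beta> (Pv x + p) (Pv x + p)"
    by (simp only: \<beta>L(3) \<beta>R(3) power2_eq_square mult.assoc)
  also have "\<beta> (Pv x + p) (Pv x + p) = QQ p x"
    by (simp add: QQ_def alg \<beta>_Pv)
  finally show ?thesis .
qed

lemma mu_Phi: "x \<in> D1 p \<Longrightarrow> mu p (Phi p x) = mm p x / c0"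
proof -
  assume x: "x \<in> D1 p"
  then have m: "mm p x \<noteq> 0" and Q: "QQ p x \<noteq> 0" by (auto simp: D1_def)
  show ?thesis using m Q c0 unfolding mu_def sy_Phi[OF x] qy_Phi[OF x] sg_def
    by (simp add: field_simps power2_eq_square)
qed

lemma Psi_Phi: "x \<in> D1 p \<Longrightarrow> Psi p (Phi p x) = x"
proof -
  assume x: "x \<in> D1 p"
  then have m: "mm p x \<noteq> 0" by (auto simp: D1_def)
  have "Psi p (Phi p x) = (mm p x / c0) *\<^sub>R ((c0 / mm p x) *\<^sub>R (Pv x + p)) - p + lz x *\<^sub>R Z"
    by (simp add: Psi_def mu_Phi[OF x] wy_Phi[OF x] lz_Phi)
  also have "\<dots> = Pv x + lz x *\<^sub>R Z" using m c0 by simp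
  finally show ?thesis by (simp add: Pv_add)
qed

lemma Phi_D2: "x \<in> D1 p \<Longrightarrow> Phi p x \<in> D2 p"
proof -
  assume x: "x \<in> D1 p"
  then have m: "mm p x \<noteq> 0" and Q: "QQ p x \<noteq> 0" by (auto simp: D1_def)
  have q: "qy p (Phi p x) \<noteq> 0" using m Q c0 by (simp add: qy_Phi[OF x])
  have "sy p (Phi p x) * qy p (Phi p x) + 2 * c0 = qy p (Phi p x) * mu p (Phi p x)"
    using q by (simp add: mu_def field_simps)
  also have "\<dots> \<noteq> 0" using q m c0 by (simp add: mu_Phi[OF x])
  finally show ?thesis using q by (simp add: D2_def)
qed

lemma lz_wy: "lz (wy p y) = 0" using lzp by (simp add: wy_def alg lz_Pv)
lemma \<beta>p_wy: "\<beta> p (wy p y) = 0" using \<beta>p c0 by (simp add: wy_def alg \<beta>_Pv sy_def)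

lemma mu_nz: "y \<in> D2 p \<Longrightarrow> mu p y \<noteq> 0"
proof -
  assume y: "y \<in> D2 p"
  then have q: "qy p y \<noteq> 0" and s: "sy p y * qy p y + 2 * c0 \<noteq> 0" by (auto simp: D2_def)
  have "sy p y * qy p y + 2 * c0 = qy p y * mu p y" using q by (simp add: mu_def field_simps)
  then show ?thesis using s by auto
qed

lemma lz_Psi: "lz (Psi p y) = lz y"
  using lzp by (simp add: Psi_def alg lz_wy)

lemma mm_Psi: "mm p (Psi p y) = mu p y * c0"
  using \<beta>p by (simp add: mm_def Psi_def alg \<beta>p_wy)

lemma QQ_Psi: "QQ p (Psi p y) = (mu p y)\<^sup>2 * qy p y"
proof -
  have "Psi p y + p = mu p y *\<^sub>R (wy p y + p) + lz y *\<^sub>R Z" by (simp add: Psi_def)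
  then show ?thesis by (simp add: QQ_def qy_def sq_aux)
qed

lemma Psi_D1: "y \<in> D2 p \<Longrightarrow> Psi p y \<in> D1 p"
  using mu_nz[of y] c0 by (auto simp: D1_def D2_def mm_Psi QQ_Psi)

lemma Phi_Psi: "y \<in> D2 p \<Longrightarrow> Phi p (Psi p y) = y"
proof -
  assume y: "y \<in> D2 p"
  have mu: "mu p y \<noteq> 0" by (rule mu_nz[OF y])
  have q: "qy p y \<noteq> 0" using y by (simp add: D2_def)
  have Pv1: "Pv (Psi p y) = mu p y *\<^sub>R (wy p y + p) - p"
    by (simp add: Pv_def lz_Psi) (simp add: Psi_def)
  have "sg p (Psi p y) = mu p y - 2 * c0 / qy p y"
    using mu q c0 unfolding sg_def mm_Psi QQ_Psi by (simp add: field_simps power2_eq_square)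
  then have sg1: "sg p (Psi p y) = sy p y" by (simp add: mu_def)
  have "Phi p (Psi p y) = (c0 / (mu p y * c0)) *\<^sub>R (mu p y *\<^sub>R (wy p y + p)) - p + sy p y *\<^sub>R p + lz y *\<^sub>R Z"
    by (simp add: Phi_def Pv1 mm_Psi sg1 lz_Psi)
  also have "\<dots> = wy p y + sy p y *\<^sub>R p + lz y *\<^sub>R Z" using mu c0 by simp
  also have "\<dots> = y" by (simp add: wy_def Pv_def)
  finally show ?thesis .
qed

lemma SS_iff: "x \<in> D1 p \<Longrightarrow> x \<in> SS \<longleftrightarrow> lz x = 0 \<and> sg p x = 0"
proof -
  assume x: "x \<in> D1 p"
  then have m: "mm p x \<noteq> 0" and Q: "QQ p x \<noteq> 0" by (auto simp: D1_def)
  show ?thesis using m Q c0 by (auto simp: SS_def sg_alt[OF Q])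
qed

lemma p_D1: "p \<in> D1 p"
proof -
  have "QQ p p = \<beta> p p + \<beta> p p + (\<beta> p p + \<beta> p p)" by (simp only: QQ_def \<beta>L(1) \<beta>R(1))
  then have "QQ p p = 4 * c0" using \<beta>p by simp
  then show ?thesis using c0 \<beta>p by (simp add: D1_def mm_def)
qed


lemma lin_a: "linear (\<lambda>x. \<beta> p x / c0)"
  unfolding linear_iff by (simp add: \<beta>R add_divide_distrib)

lemma T_exists:
  obtains T Ti :: "real^'n \<Rightarrow> real^'n" and i j :: 'n where "linear T" "linear Ti" "\<And>x. Ti (T x) = x" "\<And>y. T (Ti y) = y" "i \<noteq> j"
    "\<And>x. T x $ i = \<beta> p x / c0" "\<And>x. T x $ j = lz x"
proof -
  define a where "a x = \<beta> p x / c0" for x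
  have la: "linear a" unfolding a_def by (rule lin_a)
  have ea: "a x = (\<Sum>k\<in>UNIV. x $ k * a (axis k 1))" for x by (rule linear_coords[OF la])
  have eb: "lz x = (\<Sum>k\<in>UNIV. x $ k * lz (axis k 1))" for x by (rule linear_coords[OF lz_lin])
  obtain j where j: "lz (axis j 1) \<noteq> 0"
  proof -
    have "\<exists>j. lz (axis j 1) \<noteq> 0"
    proof (rule ccontr)
      assume "\<not> ?thesis"
      then have "lz Z = 0" using eb[of Z] by simp
      then show False using lzZ by simp
    qed
    then show ?thesis using that by blast
  qed
  define lam where "lam = a (axis j 1) / lz (axis j 1)"
  define a' where "a' k = a (axis k 1) - lam * lz (axis k 1)" for k
  have ap: "a p = 1" using \<beta>p c0 by (simp add: a_def)
  obtain i where i: "a' i \<noteq> 0"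
  proof -
    have "\<exists>i. a' i \<noteq> 0"
    proof (rule ccontr)
      assume "\<not> ?thesis"
      then have "a (axis k 1) = lam * lz (axis k 1)" for k by (simp add: a'_def)
      then have "a p = lam * lz p" using ea[of p] eb[of p] by (simp add: sum_distrib_left algebra_simps)
      then show False using ap lzp by simp
    qed
    then show ?thesis using that by blast
  qed
  have ij: "i \<noteq> j" using i j by (auto simp: a'_def lam_def)
  define det where "det = a (axis i 1) * lz (axis j 1) - a (axis j 1) * lz (axis i 1)"
  have det: "det \<noteq> 0"
  proof -
    have "det = lz (axis j 1) * a' i" using j by (simp add: det_def a'_def lam_def field_simps)
    then show ?thesis using i j by simp
  qed
  define T where "T x = x - x $ i *\<^sub>R axis i 1 - x $ j *\<^sub>R axis j 1 + a x *\<^sub>R axis i 1 + lz x *\<^sub>R axis j 1" for x :: "real^'n"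
  have TcI: "T x $ i = a x" for x using ij by (simp add: T_def axis_def)
  have TcJ: "T x $ j = lz x" for x using ij by (simp add: T_def axis_def)
  have la1: "a (x + y) = a x + a y" "a (c *\<^sub>R x) = c * a x" for x y c
    using la by (simp_all add: linear_add linear_scale)
  have lT: "linear T"
    unfolding T_def linear_iff by (simp add: la1 alg algebra_simps scaleR_add_left)
  have injT: "inj T"
    unfolding linear_inj_iff_eq_0[OF lT]
  proof (intro allI impI)
    fix x assume T0: "T x = 0"
    have ax: "a x = 0" using TcI[of x] T0 by simp
    have bx: "lz x = 0" using TcJ[of x] T0 by simp
    have xe: "x $ i *\<^sub>R axis i 1 + x $ j *\<^sub>R axis j 1 = x"
      using T0 ax bx unfolding T_def by (simp add: algebra_simps)
    have "a (x $ i *\<^sub>R axis i 1 + x $ j *\<^sub>R axis j 1) = 0" using ax by (simp only: xe)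
    then have A: "x $ i * a (axis i 1) + x $ j * a (axis j 1) = 0" by (simp add: la1)
    have "lz (x $ i *\<^sub>R axis i 1 + x $ j *\<^sub>R axis j 1) = 0" using bx by (simp only: xe)
    then have B: "x $ i * lz (axis i 1) + x $ j * lz (axis j 1) = 0" by (simp add: alg)
    have "x $ i * det = lz (axis j 1) * (x $ i * a (axis i 1) + x $ j * a (axis j 1)) - a (axis j 1) * (x $ i * lz (axis i 1) + x $ j * lz (axis j 1))"
      by (simp add: det_def algebra_simps)
    then have xi: "x $ i = 0" using A B det by simp
    have "x $ j * det = a (axis i 1) * (x $ i * lz (axis i 1) + x $ j * lz (axis j 1)) - lz (axis i 1) * (x $ i * a (axis i 1) + x $ j * a (axis j 1))"
      by (simp add: det_def algebra_simps)
    then have xj: "x $ j = 0" using A B det by simp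
    show "x = 0" using xe xi xj by simp
  qed
  have surjT: "surj T" by (rule linear_inj_imp_surj[OF lT injT])
  obtain Ti where lTi: "linear Ti" and TTi: "T \<circ> Ti = id"
    using linear_surjective_right_inverse[OF lT surjT] by blast
  have TiT: "Ti (T x) = x" for x
  proof -
    have "T (Ti (T x)) = T x" using TTi by (simp add: fun_eq_iff)
    then show ?thesis using injT by (simp add: inj_eq)
  qed
  have TTi': "T (Ti y) = y" for y using TTi by (simp add: fun_eq_iff)
  show ?thesis
    by (rule that[OF lT lTi TiT TTi' ij]) (simp_all add: TcI TcJ a_def)
qed


lemma AN_pow2: "AN q f \<Longrightarrow> AN q (\<lambda>x. (f x)\<^sup>2)"
  using AN_mult[of q f f] by (simp add: power2_eq_square)

lemma AN_mm: "AN q (mm p)"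
proof -
  have "AN q (\<lambda>x. \<beta> p x + c0)" by (rule AN_add[OF AN_linear[OF bil_lin2[OF \<beta>_bil]] AN_const])
  then show ?thesis by (simp add: mm_def[abs_def])
qed

lemma AN_QQ: "AN q (QQ p)"
proof -
  have "AN q (\<lambda>x. \<beta> (x + p) (x + p))"
    by (rule AN_bilin[OF \<beta>_bil]) (simp_all add: AN_add AN_coord AN_const)
  then show ?thesis by (simp add: QQ_def[abs_def])
qed

lemma AN_sg: "QQ p q \<noteq> 0 \<Longrightarrow> AN q (sg p)"
proof -
  assume Q: "QQ p q \<noteq> 0"
  have "AN q (\<lambda>x. mm p x / c0 - (2 * (mm p x)\<^sup>2) / (c0 * QQ p x))"
    by (rule AN_diff[OF AN_divide[OF AN_mm AN_const] AN_divide[OF AN_cmult[OF AN_pow2[OF AN_mm]] AN_cmult[OF AN_QQ]]])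
       (use Q c0 in simp_all)
  then show ?thesis by (simp add: sg_def[abs_def])
qed

lemma Phi_comp: "Phi p x $ k = (c0 / mm p x) * ((x $ k - lz x * Z $ k) + p $ k) - p $ k + sg p x * p $ k + lz x * Z $ k"
  by (simp add: Phi_def Pv_def)

lemma AN_Phi: "q \<in> D1 p \<Longrightarrow> AN q (\<lambda>x. Phi p x $ k)"
proof -
  assume q: "q \<in> D1 p"
  then have m: "mm p q \<noteq> 0" and Q: "QQ p q \<noteq> 0" by (auto simp: D1_def)
  have lzA: "AN q lz" by (rule AN_linear[OF lz_lin])
  have "AN q (\<lambda>x. (c0 / mm p x) * ((x $ k - lz x * Z $ k) + p $ k) - p $ k + sg p x * p $ k + lz x * Z $ k)"
    by (intro AN_add AN_diff AN_mult AN_divide AN_const AN_coord lzA AN_mm AN_sg Q m)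
  then show ?thesis by (simp add: Phi_comp)
qed

lemma Psi_comp: "Psi p z $ k = mu p z * ((z $ k - lz z * Z $ k - sy p z * p $ k) + p $ k) - p $ k + lz z * Z $ k"
  by (simp add: Psi_def wy_def Pv_def)

lemma AN_Psi:
  assumes lTi: "linear Ti" and q: "Ti q \<in> D2 p"
  shows "AN q (\<lambda>y. Psi p (Ti y) $ k)"
proof -
  have qn: "qy p (Ti q) \<noteq> 0" using q by (simp add: D2_def)
  have A1: "AN q (\<lambda>y. Ti y $ i)" for i by (rule AN_lin[OF lTi])
  have A2: "AN q (\<lambda>y. lz (Ti y))"
    using AN_linear[OF linear_compose[OF lTi lz_lin]] by (simp add: o_def)
  have A3: "AN q (\<lambda>y. sy p (Ti y))"
    using AN_linear[OF linear_compose[OF lTi lin_a]] by (simp add: o_def sy_def)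
  have A4: "AN q (\<lambda>y. qy p (Ti y))"
  proof -
    have "AN q (\<lambda>y. \<beta> (wy p (Ti y) + p) (wy p (Ti y) + p))"
    proof (rule AN_bilin[OF \<beta>_bil])
      fix i
      have "AN q (\<lambda>y. Ti y $ i - lz (Ti y) * Z $ i - sy p (Ti y) * p $ i + p $ i)"
        by (intro AN_add AN_diff AN_mult A1 A2 A3 AN_const)
      then show "AN q (\<lambda>y. (wy p (Ti y) + p) $ i)" by (simp add: wy_def Pv_def)
      then show "AN q (\<lambda>y. (wy p (Ti y) + p) $ i)" .
    qed
    then show ?thesis by (simp add: qy_def)
  qed
  have A5: "AN q (\<lambda>y. mu p (Ti y))"
  proof -
    have "AN q (\<lambda>y. sy p (Ti y) + 2 * c0 / qy p (Ti y))"
      by (rule AN_add[OF A3 AN_divide[OF AN_const A4]]) (use qn in simp)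
    then show ?thesis by (simp add: mu_def)
  qed
  have "AN q (\<lambda>y. mu p (Ti y) * ((Ti y $ k - lz (Ti y) * Z $ k - sy p (Ti y) * p $ k) + p $ k) - p $ k + lz (Ti y) * Z $ k)"
    by (intro AN_add AN_diff AN_mult A1 A2 A3 A5 AN_const)
  then show ?thesis by (simp add: Psi_comp)
qed

lemma chart_at:
  "\<exists>U V (\<phi> :: real^'n \<Rightarrow> real^'n) \<psi> (K :: 'n set).
     open U \<and> p \<in> U \<and> open V \<and> \<phi> ` U = V \<and> \<psi> ` V = U \<and>
     (\<forall>x\<in>U. \<psi> (\<phi> x) = x) \<and> (\<forall>y\<in>V. \<phi> (\<psi> y) = y) \<and>
     real_analytic_on \<phi> U \<and> real_analytic_on \<psi> V \<and>
     \<phi> ` (U \<inter> SS) = V \<inter> {y. \<forall>i. i \<notin> K \<longrightarrow> y $ i = 0}"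
proof -
  obtain T Ti :: "real^'n \<Rightarrow> real^'n" and i j :: 'n where
    lT: "linear T" and lTi: "linear Ti" and TiT: "\<And>x. Ti (T x) = x" and TTi: "\<And>y. T (Ti y) = y"
    and ij: "i \<noteq> j" and Tci: "\<And>x. T x $ i = \<beta> p x / c0" and Tcj: "\<And>x. T x $ j = lz x"
    using T_exists by blast
  define U where "U = D1 p"
  define \<phi> where "\<phi> x = T (Phi p x)" for x
  define \<psi> where "\<psi> y = Psi p (Ti y)" for y
  define V where "V = \<phi> ` U"
  define K where "K = UNIV - {i, j}"
  have cb: "continuous_on UNIV (\<lambda>x. \<beta> p x)" by (rule cont_lin[OF bil_lin2[OF \<beta>_bil]])
  have cl: "continuous_on UNIV lz" by (rule cont_lin[OF lz_lin])
  have cTi: "continuous_on UNIV Ti" by (rule cont_lin[OF lTi])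
  have openU: "open U"
  proof -
    have c1: "continuous_on UNIV (mm p)" unfolding mm_def[abs_def] by (intro continuous_intros cb)
    have c2: "continuous_on UNIV (QQ p)" unfolding QQ_def[abs_def]
      by (rule cont_bilin[OF \<beta>_bil]) (intro continuous_intros)+
    show ?thesis unfolding U_def D1_def
      by (intro open_Collect_conj open_Collect_neq c1 c2 continuous_intros)
  qed
  have V_eq: "V = {y. Ti y \<in> D2 p}"
  proof safe
    fix y assume "y \<in> V"
    then obtain x where x: "x \<in> D1 p" "y = T (Phi p x)" by (auto simp: V_def U_def \<phi>_def)
    then show "Ti y \<in> D2 p" using Phi_D2 by (simp add: TiT)
  next
    fix y assume y: "Ti y \<in> D2 p"
    have "y = \<phi> (Psi p (Ti y))" by (simp add: \<phi>_def Phi_Psi[OF y] TTi)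
    then show "y \<in> V" using Psi_D1[OF y] by (simp add: V_def U_def)
  qed
  have openV: "open V"
  proof -
    have cw: "continuous_on UNIV (\<lambda>y. wy p (Ti y) + p)"
    proof -
      have "continuous_on UNIV (\<lambda>y. Ti y - lz (Ti y) *\<^sub>R Z - (\<beta> p (Ti y) / c0) *\<^sub>R p + p)"
        by (intro continuous_intros continuous_on_compose2[OF cl cTi] continuous_on_compose2[OF cb cTi] cTi) (use c0 in auto)
      then show ?thesis by (simp add: wy_def Pv_def sy_def)
    qed
    have cq: "continuous_on UNIV (\<lambda>y. qy p (Ti y))"
      unfolding qy_def by (rule cont_bilin[OF \<beta>_bil cw cw])
    have cs: "continuous_on UNIV (\<lambda>y. sy p (Ti y))"
      unfolding sy_def by (intro continuous_intros continuous_on_compose2[OF cb cTi]) (use c0 in auto)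
    have "open {y. qy p (Ti y) \<noteq> 0 \<and> sy p (Ti y) * qy p (Ti y) + 2 * c0 \<noteq> 0}"
      by (intro open_Collect_conj open_Collect_neq cq cs continuous_intros)
    then show ?thesis by (simp add: V_eq D2_def)
  qed
  have psiphi: "\<forall>x\<in>U. \<psi> (\<phi> x) = x" by (simp add: U_def \<phi>_def \<psi>_def TiT Psi_Phi)
  have phipsi: "\<forall>y\<in>V. \<phi> (\<psi> y) = y" using psiphi by (auto simp: V_def)
  have psiV: "\<psi> ` V = U"
  proof safe
    fix y assume "y \<in> V" then show "\<psi> y \<in> U" using psiphi by (auto simp: V_def)
  next
    fix x assume "x \<in> U" then show "x \<in> \<psi> ` V" using psiphi by (auto simp: V_def image_iff)
  qed
  have anphi: "real_analytic_on \<phi> U"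
  proof (rule real_analytic_onI)
    fix q j' assume "q \<in> U"
    then show "AN q (\<lambda>x. \<phi> x $ j')" unfolding \<phi>_def U_def
      by (intro AN_lincomp[OF lT] AN_Phi)
  qed
  have anpsi: "real_analytic_on \<psi> V"
  proof (rule real_analytic_onI)
    fix q j' assume "q \<in> V"
    then show "AN q (\<lambda>x. \<psi> x $ j')" unfolding \<psi>_def V_eq
      by (intro AN_Psi[OF lTi]) simp
  qed
  have slice: "{y. \<forall>k. k \<notin> K \<longrightarrow> y $ k = 0} = {y. y $ i = 0 \<and> y $ j = 0}"
    by (auto simp: K_def)
  have phi_i: "x \<in> U \<Longrightarrow> \<phi> x $ i = sg p x" for x
    using c0 by (simp add: \<phi>_def Tci U_def \<beta>p_Phi)
  have phi_j: "\<phi> x $ j = lz x" for x by (simp add: \<phi>_def Tcj lz_Phi)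
  have img: "\<phi> ` (U \<inter> SS) = V \<inter> {y. \<forall>k. k \<notin> K \<longrightarrow> y $ k = 0}"
    unfolding slice
  proof safe
    fix x assume x: "x \<in> U" "x \<in> SS"
    then show "\<phi> x \<in> V" by (simp add: V_def)
    show "\<phi> x $ i = 0" using x SS_iff phi_i by (auto simp: U_def)
    show "\<phi> x $ j = 0" using x SS_iff phi_j by (auto simp: U_def)
  next
    fix y assume y: "y \<in> V" "y $ i = 0" "y $ j = 0"
    then obtain x where x: "x \<in> U" "y = \<phi> x" by (auto simp: V_def)
    then have "x \<in> SS" using SS_iff[of x] phi_i[of x] phi_j[of x] y by (auto simp: U_def)
    then show "y \<in> \<phi> ` (U \<inter> SS)" using x by auto
  qed
  show ?thesis
    apply (rule exI[of _ U], rule exI[of _ V], rule exI[of _ \<phi>], rule exI[of _ \<psi>], rule exI[of _ K])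
    using openU p_D1 openV psiV psiphi phipsi anphi anpsi img by (simp add: U_def V_def)
qed

end

lemma SS_submanifold: "analytic_submanifold SS"
  unfolding analytic_submanifold_def
proof
  fix p assume "p \<in> SS"
  then have "lz p = 0" "\<beta> p p = c0" by (auto simp: SS_def)
  then show "\<exists>U V (\<phi> :: real^'n \<Rightarrow> real^'n) \<psi> (K :: 'n set).
     open U \<and> p \<in> U \<and> open V \<and> \<phi> ` U = V \<and> \<psi> ` V = U \<and>
     (\<forall>x\<in>U. \<psi> (\<phi> x) = x) \<and> (\<forall>y\<in>V. \<phi> (\<psi> y) = y) \<and>
     real_analytic_on \<phi> U \<and> real_analytic_on \<psi> V \<and>
     \<phi> ` (U \<inter> SS) = V \<inter> {y. \<forall>i. i \<notin> K \<longrightarrow> y $ i = 0}"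
    by (rule chart_at)
qed

end



lemma deriv_unique:
  fixes F G :: "real \<Rightarrow> 'a::real_normed_vector"
  assumes I: "is_interval I" and a: "a \<in> I"
    and dF: "\<And>t. t \<in> I \<Longrightarrow> (F has_vector_derivative f t) (at t)"
    and dG: "\<And>t. t \<in> I \<Longrightarrow> (G has_vector_derivative f t) (at t)"
    and Fa: "F a = G a" and t: "t \<in> I"
  shows "F t = G t"
proof -
  have "\<And>s. s \<in> I \<Longrightarrow> ((\<lambda>s. F s - G s) has_vector_derivative 0) (at s within I)"
  proof -
    fix s assume s: "s \<in> I"
    have "((\<lambda>s. F s - G s) has_vector_derivative f s - f s) (at s)"
      by (rule has_vector_derivative_diff[OF dF[OF s] dG[OF s]])
    then show "((\<lambda>s. F s - G s) has_vector_derivative 0) (at s within I)"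
      by (simp add: has_vector_derivative_at_within)
  qed
  then obtain c where c: "\<And>s. s \<in> I \<Longrightarrow> F s - G s = c"
    using has_vector_derivative_zero_constant[OF is_interval_convex[OF I]] by blast
  have "c = 0" using c[OF a] Fa by simp
  then show ?thesis using c[OF t] by simp
qed

locale nil2 =
  fixes br :: "real^'n \<Rightarrow> real^'n \<Rightarrow> real^'n" and B :: "real^'n \<Rightarrow> real^'n \<Rightarrow> real"
  assumes br_bilin: "bilinear br"
    and br_alt: "\<And>x. br x x = 0"
    and two_step: "\<And>x y z. br (br x y) z = 0"
    and B_bilin: "bilinear B"
    and B_sym: "\<And>x y. B x y = B y x"
    and B_nondeg: "\<And>x. (\<forall>y. B x y = 0) \<Longrightarrow> x = 0"
    and dim_center: "dim {z. \<forall>x. br z x = 0} = 1"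
    and B_center_nondeg: "\<And>z. z \<in> {z. \<forall>x. br z x = 0} \<Longrightarrow>
                             (\<forall>w\<in>{z. \<forall>x. br z x = 0}. B z w = 0) \<Longrightarrow> z = 0"
begin

lemma brL: "br (x + y) z = br x z + br y z" "br (x - y) z = br x z - br y z"
  "br (a *\<^sub>R x) z = a *\<^sub>R br x z" "br (- x) z = - br x z" "br 0 z = 0"
  using br_bilin by (simp_all add: bilinear_ladd bilinear_lsub bilinear_lmul bilinear_lneg bilinear_lzero)
lemma brR: "br z (x + y) = br z x + br z y" "br z (x - y) = br z x - br z y"
  "br z (a *\<^sub>R x) = a *\<^sub>R br z x" "br z (- x) = - br z x" "br z 0 = 0"
  using br_bilin by (simp_all add: bilinear_radd bilinear_rsub bilinear_rmul bilinear_rneg bilinear_rzero)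
lemma BL: "B (x + y) z = B x z + B y z" "B (x - y) z = B x z - B y z"
  "B (a *\<^sub>R x) z = a * B x z" "B (- x) z = - B x z" "B 0 z = 0"
  using B_bilin by (simp_all add: bilinear_ladd bilinear_lsub bilinear_lmul bilinear_lneg bilinear_lzero)
lemma BR: "B z (x + y) = B z x + B z y" "B z (x - y) = B z x - B z y"
  "B z (a *\<^sub>R x) = a * B z x" "B z (- x) = - B z x" "B z 0 = 0"
  using B_bilin by (simp_all add: bilinear_radd bilinear_rsub bilinear_rmul bilinear_rneg bilinear_rzero)

lemma br_anti: "br y x = - br x y"
proof -
  have "br (x + y) (x + y) = br x x + br y x + (br x y + br y y)" by (simp only: brL brR)
  then have "br x y + br y x = 0" by (simp add: br_alt add.commute)
  then show ?thesis by (simp add: add_eq_0_iff)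
qed

definition "Cn = {z. \<forall>x. br z x = 0}"

lemma subspace_Cn: "subspace Cn"
  unfolding subspace_def Cn_def by (simp add: brL)

lemma Z_exists: "\<exists>Z. Z \<noteq> 0 \<and> Cn = range (\<lambda>t. t *\<^sub>R Z)"
proof -
  obtain Bs where Bs: "Bs \<subseteq> Cn" "independent Bs" "Cn \<subseteq> span Bs" "card Bs = dim Cn"
    using basis_exists by blast
  then have "card Bs = 1" using dim_center by (simp add: Cn_def)
  then obtain Z where Z: "Bs = {Z}" using card_1_singletonE by blast
  have Z0: "Z \<noteq> 0" using Bs(2) Z by (auto simp: dependent_zero)
  have "span {Z} \<subseteq> Cn" using Bs(1) Z subspace_Cn by (simp add: span_minimal)
  then have "Cn = span {Z}" using Bs(3) Z by auto
  then show ?thesis using Z0 by (auto simp: span_singleton)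
qed

definition "Z = (SOME Z. Z \<noteq> 0 \<and> Cn = range (\<lambda>t. t *\<^sub>R Z))"

lemma Z_nz: "Z \<noteq> 0" and Cn_eq: "Cn = range (\<lambda>t. t *\<^sub>R Z)"
  using someI_ex[OF Z_exists] by (auto simp: Z_def[symmetric])

lemma in_Cn: "z \<in> Cn \<longleftrightarrow> (\<exists>t. z = t *\<^sub>R Z)"
  using Cn_eq by auto

lemma brZ1: "br Z x = 0"
proof -
  have "Z \<in> Cn" using in_Cn[of Z] by (metis scaleR_one)
  then show ?thesis by (simp add: Cn_def)
qed

lemma brZ2: "br x Z = 0" using brZ1 br_anti by (metis neg_equal_0_iff_equal)

definition "\<epsilon> = B Z Z"

lemma eps_nz: "\<epsilon> \<noteq> 0"
proof
  assume e: "\<epsilon> = 0"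
  have "Z \<in> {z. \<forall>x. br z x = 0}" using brZ1 by simp
  moreover have "\<forall>w\<in>{z. \<forall>x. br z x = 0}. B Z w = 0"
  proof
    fix w assume "w \<in> {z. \<forall>x. br z x = 0}"
    then obtain t where "w = t *\<^sub>R Z" using in_Cn by (auto simp: Cn_def)
    then show "B Z w = 0" using e by (simp add: BR \<epsilon>_def)
  qed
  ultimately have "Z = 0" by (rule B_center_nondeg)
  then show False using Z_nz by simp
qed

definition "fZ x = B x Z / \<epsilon>"
definition "om x y = B (br x y) Z / \<epsilon>"

lemma br_om: "br x y = om x y *\<^sub>R Z"
proof -
  have "br x y \<in> Cn" by (simp add: Cn_def two_step)
  then obtain t where t: "br x y = t *\<^sub>R Z" using in_Cn by auto
  then have "om x y = t" using eps_nz by (simp add: om_def BL \<epsilon>_def)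
  then show ?thesis using t by simp
qed

lemma fZ_Z: "fZ Z = 1" using eps_nz by (simp add: fZ_def \<epsilon>_def)
lemma fZs: "fZ (x + y) = fZ x + fZ y" "fZ (x - y) = fZ x - fZ y" "fZ (a *\<^sub>R x) = a * fZ x"
  "fZ (- x) = - fZ x" "fZ 0 = 0"
  by (simp_all add: fZ_def BL add_divide_distrib diff_divide_distrib)
lemma lin_fZ: "linear fZ" unfolding linear_iff by (simp add: fZs)

lemma omL: "om (x + y) z = om x z + om y z" "om (x - y) z = om x z - om y z" "om (a *\<^sub>R x) z = a * om x z"
  "om 0 z = 0" "om (- x) z = - om x z"
  by (simp_all add: om_def brL BL add_divide_distrib diff_divide_distrib)
lemma omR: "om z (x + y) = om z x + om z y" "om z (x - y) = om z x - om z y" "om z (a *\<^sub>R x) = a * om z x"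
  "om z 0 = 0" "om z (- x) = - om z x"
  by (simp_all add: om_def brR BL add_divide_distrib diff_divide_distrib)
lemma omZ: "om Z x = 0" "om x Z = 0" by (simp_all add: om_def brZ1 brZ2 BL)
lemma om_anti: "om y x = - om x y" by (simp add: om_def br_anti[of y x] BL)
lemma om_self: "om x x = 0" by (simp add: om_def br_alt BL)
lemma lin_om: "linear (om x)" unfolding linear_iff by (simp add: omR)

lemma B_ext: "(\<And>W. B a W = B b W) \<Longrightarrow> a = b"
proof -
  assume h: "\<And>W. B a W = B b W"
  have "\<forall>W. B (a - b) W = 0" using h by (simp add: BL)
  then have "a - b = 0" by (rule B_nondeg)
  then show ?thesis by simp
qed

lemma riesz: "linear (\<phi> :: real^'n \<Rightarrow> real) \<Longrightarrow> \<exists>w. \<forall>y. B w y = \<phi> y"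
proof -
  assume l: "linear \<phi>"
  define M where "M x = (\<chi> j. B x (axis j 1))" for x :: "real^'n"
  have lM: "linear M" unfolding M_def linear_iff by (simp add: vec_eq_iff BL)
  have inj: "inj M"
    unfolding linear_inj_iff_eq_0[OF lM]
  proof (intro allI impI)
    fix x assume "M x = 0"
    then have h: "B x (axis j 1) = 0" for j by (simp add: M_def vec_eq_iff)
    have "B x y = 0" for y
      using linear_coords[OF bil_lin2[OF B_bilin], of x y] h by simp
    then show "x = 0" using B_nondeg by blast
  qed
  then have "surj M" by (rule linear_inj_imp_surj[OF lM])
  then obtain w where w: "M w = (\<chi> j. \<phi> (axis j 1))" by (metis surjD)
  then have h: "B w (axis j 1) = \<phi> (axis j 1)" for j by (simp add: M_def vec_eq_iff)
  have "B w y = \<phi> y" for y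
    using linear_coords[OF bil_lin2[OF B_bilin], of w y] linear_coords[OF l, of y] h by simp
  then show ?thesis by blast
qed

definition "Kz X Y W = (B (br X Y) W - B (br Y W) X + B (br W X) Y) / 2"

lemma lin_Kz: "linear (Kz X Y)"
  unfolding linear_iff Kz_def by (simp add: BL BR brL brR field_simps)

lemma nab_prop: "B (lc_nabla br B X Y) W = Kz X Y W"
proof -
  obtain w where w: "\<forall>y. B w y = Kz X Y y" using riesz[OF lin_Kz] by blast
  have "\<exists>!w. \<forall>y. B w y = Kz X Y y"
  proof (rule ex1I[of _ w])
    show "\<forall>y. B w y = Kz X Y y" by (rule w)
    fix w' assume "\<forall>y. B w' y = Kz X Y y"
    then show "w' = w" using w by (intro B_ext) simp
  qed
  then have "\<forall>y. B (lc_nabla br B X Y) y = Kz X Y y"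
    unfolding lc_nabla_def Kz_def[symmetric] by (rule theI')
  then show ?thesis by simp
qed

lemma nab_eqI: "(\<And>W. B w W = Kz X Y W) \<Longrightarrow> lc_nabla br B X Y = w"
  using nab_prop by (intro B_ext) simp


lemma BZ: "B Z y = \<epsilon> * fZ y" "B y Z = \<epsilon> * fZ y"
  using eps_nz by (simp_all add: fZ_def B_sym[of Z y])

definition "Jv x = (-2) *\<^sub>R lc_nabla br B x Z"

lemma JvB: "B (Jv x) W = \<epsilon> * om x W"
proof -
  have "B (lc_nabla br B x Z) W = Kz x Z W" by (rule nab_prop)
  also have "\<dots> = - (\<epsilon> * om x W) / 2"
    by (simp add: Kz_def br_om BL BR BZ fZ_Z om_anti[of W x] omZ fZs)
  finally show ?thesis by (simp add: Jv_def BL)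
qed

lemma Jv_lin: "Jv (x + y) = Jv x + Jv y" "Jv (a *\<^sub>R x) = a *\<^sub>R Jv x"
  by (rule B_ext, simp add: JvB BL omL algebra_simps)+

lemma Jv_0: "Jv 0 = 0" using Jv_lin(2)[of 0 0] by simp

lemma lin_Jv: "linear Jv" unfolding linear_iff by (simp add: Jv_lin)

lemma Jv_Z: "Jv Z = 0" by (rule B_ext) (simp add: JvB omZ BL)

lemma fZ_Jv: "fZ (Jv x) = 0" using eps_nz JvB[of x Z] by (simp add: fZ_def omZ)

lemma om_Jv: "om x (Jv y) = B (Jv x) (Jv y) / \<epsilon>"
  using eps_nz by (simp add: JvB)

definition "bt x y = B (Jv x) (Jv y) / \<epsilon>"

lemma nab_v: "fZ X = 0 \<Longrightarrow> lc_nabla br B X y = (om X y / 2) *\<^sub>R Z - (fZ y / 2) *\<^sub>R Jv X"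
proof (rule nab_eqI)
  fix W assume X: "fZ X = 0"
  show "B ((om X y / 2) *\<^sub>R Z - (fZ y / 2) *\<^sub>R Jv X) W = Kz X y W"
    using X by (simp add: Kz_def br_om BL BR BZ JvB om_anti[of W X] algebra_simps)
qed

lemma nab_v2: "fZ X = 0 \<Longrightarrow> lc_nabla br B y X = (om y X / 2) *\<^sub>R Z - (fZ y / 2) *\<^sub>R Jv X"
proof (rule nab_eqI)
  fix W assume X: "fZ X = 0"
  show "B ((om y X / 2) *\<^sub>R Z - (fZ y / 2) *\<^sub>R Jv X) W = Kz y X W"
    using X by (simp add: Kz_def br_om BL BR BZ JvB algebra_simps)
qed

lemma nab_0: "lc_nabla br B y 0 = 0"
  by (rule nab_eqI) (simp add: Kz_def brL brR BL BR)

lemma curv_v: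
  assumes X: "fZ X = 0"
  shows "lc_curv br B y X X = (fZ y * om X (Jv X) / 4) *\<^sub>R Z + (3 * om y X / 4) *\<^sub>R Jv X"
proof -
  have nXX: "lc_nabla br B X X = 0" using X by (simp add: nab_v om_self)
  have a: "lc_nabla br B X (lc_nabla br B y X) = (- fZ y * om X (Jv X) / 4) *\<^sub>R Z - (om y X / 4) *\<^sub>R Jv X"
    using X by (simp add: nab_v2 nab_v omR omZ fZs fZ_Z fZ_Jv algebra_simps)
  have b: "lc_nabla br B (br y X) X = - (om y X / 2) *\<^sub>R Jv X"
    using X by (simp add: nab_v2 br_om omL omZ fZs fZ_Z)
  show ?thesis
    unfolding lc_curv_def nXX nab_0 a b vec_eq_iff by (simp add: field_simps)
qed

lemma E_formula:
  assumes X: "fZ X = 0"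
  shows "lc_nabla br B X (y1 + lc_nabla br B X y) + lc_curv br B y X X
     = (om X y1 / 2) *\<^sub>R Z - (fZ y1 / 2 + om X y) *\<^sub>R Jv X"
proof -
  have D: "lc_nabla br B X (y1 + lc_nabla br B X y) =
      ((om X y1 - fZ y * om X (Jv X) / 2) / 2) *\<^sub>R Z - ((fZ y1 + om X y / 2) / 2) *\<^sub>R Jv X"
    using X by (simp add: nab_v omR omZ fZs fZ_Z fZ_Jv algebra_simps)
  show ?thesis
    unfolding D curv_v[OF X] vec_eq_iff using om_anti[of y X] by (simp add: field_simps)
qed


lemma blin_fZ: "bounded_linear fZ" using lin_fZ by (simp add: linear_conv_bounded_linear)

definition "Pz x = x - fZ x *\<^sub>R Z"

lemma lin_Pz: "linear Pz" unfolding linear_iff Pz_def by (simp add: fZs algebra_simps)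
lemma blin_Pz: "bounded_linear Pz" using lin_Pz by (simp add: linear_conv_bounded_linear)
lemma Pz_dec: "x = Pz x + fZ x *\<^sub>R Z" by (simp add: Pz_def)
lemma Pzs: "Pz (x + y) = Pz x + Pz y" "Pz (x - y) = Pz x - Pz y" "Pz (a *\<^sub>R x) = a *\<^sub>R Pz x" "Pz 0 = 0" "Pz (- x) = - Pz x"
  "Pz Z = 0" "Pz (Jv x) = Jv x" "fZ (Pz x) = 0"
  by (simp_all add: Pz_def fZs fZ_Z fZ_Jv algebra_simps)
lemma om_Pz: "om x (Pz y) = om x y" by (simp add: Pz_def omR omZ)
lemma Pz_v: "fZ x = 0 \<Longrightarrow> Pz x = x" by (simp add: Pz_def)

lemma nab_self0: "fZ a = 0 \<Longrightarrow> lc_nabla br B a a = 0"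
  by (simp add: nab_v om_self)

lemma fZ_nab_self: "fZ (lc_nabla br B a a) = 0"
proof -
  have "B (lc_nabla br B a a) Z = Kz a a Z" by (rule nab_prop)
  also have "\<dots> = 0" by (simp add: Kz_def br_alt brZ1 brZ2 BL)
  finally show ?thesis by (simp add: fZ_def)
qed

lemma geod_line:
  assumes g: "geodesic_on br B I \<gamma> \<gamma>'" and I0: "0 \<in> I" and g0: "\<gamma> 0 = 0"
    and X: "\<gamma>' 0 = X" "fZ X = 0" and t: "t \<in> I"
  shows "\<gamma> t = t *\<^sub>R X \<and> \<gamma>' t = X \<and> lt_vel br \<gamma> \<gamma>' t = X"
proof -
  have oI: "open I" and iI: "is_interval I" and dg: "\<And>t. t \<in> I \<Longrightarrow> (\<gamma> has_vector_derivative \<gamma>' t) (at t)"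
    using g by (auto simp: geodesic_on_def)
  obtain u' where du: "\<And>t. t \<in> I \<Longrightarrow> (lt_vel br \<gamma> \<gamma>' has_vector_derivative u' t) (at t)"
    and eu: "\<And>t. t \<in> I \<Longrightarrow> u' t + lc_nabla br B (lt_vel br \<gamma> \<gamma>' t) (lt_vel br \<gamma> \<gamma>' t) = 0"
    using g by (auto simp: geodesic_on_def)
  let ?u = "lt_vel br \<gamma> \<gamma>'"
  have u0: "?u 0 = X" using g0 X by (simp add: lt_vel_def brL)
  have fu: "fZ (?u s) = 0" if s: "s \<in> I" for s
  proof -
    have "(\<lambda>s. fZ (?u s)) s = (\<lambda>s. 0) s"
    proof (rule deriv_unique[OF iI I0 _ _ _ s])
      fix t assume t: "t \<in> I"
      have "((\<lambda>s. fZ (?u s)) has_vector_derivative fZ (u' t)) (at t)"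
        by (rule bounded_linear.has_vector_derivative[OF blin_fZ du[OF t]])
      moreover have "fZ (u' t) = 0"
        using arg_cong[OF eu[OF t], of fZ] by (simp add: fZs fZ_nab_self)
      ultimately show "((\<lambda>s. fZ (?u s)) has_vector_derivative 0) (at t)" by simp
    next
      fix t show "((\<lambda>s. 0::real) has_vector_derivative 0) (at t)" by (rule derivative_intros)
    next
      show "fZ (?u 0) = 0" using u0 X by simp
    qed
    then show ?thesis by simp
  qed
  have uX: "?u s = X" if s: "s \<in> I" for s
  proof (rule deriv_unique[OF iI I0 _ _ _ s])
    fix t assume t: "t \<in> I"
    have "u' t = 0" using eu[OF t] nab_self0[OF fu[OF t]] by simp
    then show "(?u has_vector_derivative 0) (at t)" using du[OF t] by simp
  next
    fix t show "((\<lambda>s. X) has_vector_derivative 0) (at t)" by (rule derivative_intros)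
  next
    show "?u 0 = X" by (rule u0)
  qed
  have g'eq: "\<gamma>' s = X + (om (\<gamma> s) (\<gamma>' s) / 2) *\<^sub>R Z" if s: "s \<in> I" for s
    using uX[OF s] by (simp add: lt_vel_def br_om algebra_simps)
  have Pg: "Pz (\<gamma> s) = s *\<^sub>R X" if s: "s \<in> I" for s
  proof (rule deriv_unique[OF iI I0 _ _ _ s])
    fix t assume t: "t \<in> I"
    have "((\<lambda>s. Pz (\<gamma> s)) has_vector_derivative Pz (\<gamma>' t)) (at t)"
      by (rule bounded_linear.has_vector_derivative[OF blin_Pz dg[OF t]])
    moreover have "Pz (\<gamma>' t) = X"
      using X(2) by (subst g'eq[OF t]) (simp add: Pzs Pz_v)
    ultimately show "((\<lambda>s. Pz (\<gamma> s)) has_vector_derivative X) (at t)" by simp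
  next
    fix t show "((\<lambda>s. s *\<^sub>R X) has_vector_derivative X) (at t)"
      by (auto intro!: derivative_eq_intros)
  next
    show "Pz (\<gamma> 0) = 0 *\<^sub>R X" using g0 by (simp add: Pzs)
  qed
  have omg: "om (\<gamma> s) (\<gamma>' s) = 0" if s: "s \<in> I" for s
  proof -
    have "om (\<gamma> s) (\<gamma>' s) = om (s *\<^sub>R X + fZ (\<gamma> s) *\<^sub>R Z) (X + (om (\<gamma> s) (\<gamma>' s) / 2) *\<^sub>R Z)"
      using Pz_dec[of "\<gamma> s"] Pg[OF s] g'eq[OF s] by simp
    also have "\<dots> = 0" by (simp add: omL omR omZ om_self)
    finally show ?thesis .
  qed
  have fg: "fZ (\<gamma> s) = 0" if s: "s \<in> I" for s
  proof -
    have "(\<lambda>s. fZ (\<gamma> s)) s = (\<lambda>s. 0) s"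
    proof (rule deriv_unique[OF iI I0 _ _ _ s])
      fix t assume t: "t \<in> I"
      have "((\<lambda>s. fZ (\<gamma> s)) has_vector_derivative fZ (\<gamma>' t)) (at t)"
        by (rule bounded_linear.has_vector_derivative[OF blin_fZ dg[OF t]])
      moreover have "fZ (\<gamma>' t) = 0" using X(2) g'eq[OF t] omg[OF t] by simp
      ultimately show "((\<lambda>s. fZ (\<gamma> s)) has_vector_derivative 0) (at t)" by simp
    next
      fix t show "((\<lambda>s. 0::real) has_vector_derivative 0) (at t)" by (rule derivative_intros)
    next
      show "fZ (\<gamma> 0) = 0" using g0 by (simp add: fZs)
    qed
    then show ?thesis by simp
  qed
  have "\<gamma> t = t *\<^sub>R X" using Pz_dec[of "\<gamma> t"] Pg[OF t] fg[OF t] by simp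
  moreover have "\<gamma>' t = X" using g'eq[OF t] omg[OF t] by simp
  ultimately show ?thesis using uX[OF t] by simp
qed


lemma blin_om: "bounded_linear (om X)" using lin_om by (simp add: linear_conv_bounded_linear)

lemma jac_forward:
  assumes X: "fZ X = 0" and oI: "open I" and iI: "is_interval I" and I0: "0 \<in> I"
    and t0: "t0 \<in> I" "t0 \<noteq> 0"
    and uX: "\<And>t. t \<in> I \<Longrightarrow> lt_vel br \<gamma> \<gamma>' t = X"
    and J: "jacobi_field br B I \<gamma> \<gamma>' y" and y0: "y 0 = 0" and yt0: "y t0 = 0"
    and ynz: "\<exists>t\<in>I. y t \<noteq> 0"
  shows "t0\<^sup>2 * om X (Jv X) = -12"
proof -
  let ?lt = "lt_vel br \<gamma> \<gamma>'"
  obtain y1 w1 where dy: "\<And>t. t \<in> I \<Longrightarrow> (y has_vector_derivative y1 t) (at t)"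
    and dD0: "\<And>t. t \<in> I \<Longrightarrow> ((\<lambda>s. y1 s + lc_nabla br B (?lt s) (y s)) has_vector_derivative w1 t) (at t)"
    and E0: "\<And>t. t \<in> I \<Longrightarrow> w1 t + lc_nabla br B (?lt t) (y1 t + lc_nabla br B (?lt t) (y t))
          + lc_curv br B (y t) (?lt t) (?lt t) = 0"
    using J unfolding jacobi_field_def by blast
  define \<Omega> where "\<Omega> = om X (Jv X)"
  define N where "N v = (om X v / 2) *\<^sub>R Z - (fZ v / 2) *\<^sub>R Jv X" for v
  have nabX: "lc_nabla br B X v = N v" for v by (simp add: N_def nab_v[OF X])
  have blN: "bounded_linear N"
    unfolding linear_conv_bounded_linear[symmetric] linear_iff N_def
    by (simp add: omR fZs algebra_simps add_divide_distrib scaleR_add_left)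
  have dD: "((\<lambda>s. y1 s + N (y s)) has_vector_derivative w1 t) (at t)" if t: "t \<in> I" for t
    by (rule has_vector_derivative_transform_within_open[OF dD0[OF t] oI t]) (simp add: uX nabX)
  have Ew: "w1 t = - ((om X (y1 t) / 2) *\<^sub>R Z - (fZ (y1 t) / 2 + om X (y t)) *\<^sub>R Jv X)" if t: "t \<in> I" for t
  proof -
    have "w1 t + (lc_nabla br B X (y1 t + lc_nabla br B X (y t)) + lc_curv br B (y t) X X) = 0"
      using E0[OF t] uX[OF t] by (simp add: add.assoc)
    then show ?thesis unfolding E_formula[OF X] by (simp only: eq_neg_iff_add_eq_0)
  qed
  have dy1: "(y1 has_vector_derivative (w1 t - N (y1 t))) (at t)" if t: "t \<in> I" for t
  proof -
    have "((\<lambda>s. (y1 s + N (y s)) - N (y s)) has_vector_derivative (w1 t - N (y1 t))) (at t)"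
      by (rule has_vector_derivative_diff[OF dD[OF t] bounded_linear.has_vector_derivative[OF blN dy[OF t]]])
    then show ?thesis by simp
  qed
  have fZd: "fZ (w1 t - N (y1 t)) = - om X (y1 t)" if t: "t \<in> I" for t
    by (simp only: Ew[OF t] N_def fZs fZ_Z fZ_Jv)
  have Pzd: "Pz (w1 t - N (y1 t)) = (fZ (y1 t) + om X (y t)) *\<^sub>R Jv X" if t: "t \<in> I" for t
    by (simp only: Ew[OF t] N_def Pzs) (simp add: vec_eq_iff field_simps)
  define c where "c = fZ (y1 0) + om X (y 0)"
  have hc: "fZ (y1 t) + om X (y t) = c" if t: "t \<in> I" for t
  proof -
    have "(\<lambda>s. fZ (y1 s) + om X (y s)) t = (\<lambda>s. c) t"
    proof (rule deriv_unique[OF iI I0 _ _ _ t])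
      fix s assume s: "s \<in> I"
      have "((\<lambda>s. fZ (y1 s) + om X (y s)) has_vector_derivative fZ (w1 s - N (y1 s)) + om X (y1 s)) (at s)"
        by (rule has_vector_derivative_add[OF bounded_linear.has_vector_derivative[OF blin_fZ dy1[OF s]]
              bounded_linear.has_vector_derivative[OF blin_om dy[OF s]]])
      then show "((\<lambda>s. fZ (y1 s) + om X (y s)) has_vector_derivative 0) (at s)" by (simp add: fZd[OF s])
    next
      fix s show "((\<lambda>s. c) has_vector_derivative 0) (at s)" by (rule derivative_intros)
    qed (simp add: c_def)
    then show ?thesis by simp
  qed
  have c0: "c = fZ (y1 0)" using y0 by (simp add: c_def omR)
  define V1 where "V1 = Pz (y1 0)"
  have P1: "Pz (y1 t) = V1 + (t * c) *\<^sub>R Jv X" if t: "t \<in> I" for t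
  proof (rule deriv_unique[OF iI I0 _ _ _ t])
    fix s assume s: "s \<in> I"
    have "((\<lambda>s. Pz (y1 s)) has_vector_derivative Pz (w1 s - N (y1 s))) (at s)"
      by (rule bounded_linear.has_vector_derivative[OF blin_Pz dy1[OF s]])
    then show "((\<lambda>s. Pz (y1 s)) has_vector_derivative c *\<^sub>R Jv X) (at s)" by (simp add: Pzd[OF s] hc[OF s])
  next
    fix s show "((\<lambda>s. V1 + (s * c) *\<^sub>R Jv X) has_vector_derivative c *\<^sub>R Jv X) (at s)"
      by (auto intro!: derivative_eq_intros)
  qed (simp add: V1_def)
  have P0: "Pz (y t) = t *\<^sub>R V1 + (t\<^sup>2 / 2 * c) *\<^sub>R Jv X" if t: "t \<in> I" for t
  proof (rule deriv_unique[OF iI I0 _ _ _ t])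
    fix s assume s: "s \<in> I"
    have "((\<lambda>s. Pz (y s)) has_vector_derivative Pz (y1 s)) (at s)"
      by (rule bounded_linear.has_vector_derivative[OF blin_Pz dy[OF s]])
    then show "((\<lambda>s. Pz (y s)) has_vector_derivative V1 + (s * c) *\<^sub>R Jv X) (at s)" by (simp add: P1[OF s])
  next
    fix s show "((\<lambda>s. s *\<^sub>R V1 + (s\<^sup>2 / 2 * c) *\<^sub>R Jv X) has_vector_derivative V1 + (s * c) *\<^sub>R Jv X) (at s)"
      by (auto intro!: derivative_eq_intros simp: power2_eq_square)
  qed (simp add: y0 Pzs)
  have F0: "fZ (y t) = c * t - t\<^sup>2 / 2 * om X V1 - t ^ 3 / 6 * c * \<Omega>" if t: "t \<in> I" for t
  proof (rule deriv_unique[OF iI I0 _ _ _ t])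
    fix s assume s: "s \<in> I"
    have "((\<lambda>s. fZ (y s)) has_vector_derivative fZ (y1 s)) (at s)"
      by (rule bounded_linear.has_vector_derivative[OF blin_fZ dy[OF s]])
    moreover have "fZ (y1 s) = c - s * om X V1 - s\<^sup>2 / 2 * c * \<Omega>"
    proof -
      have "om X (y s) = om X (Pz (y s))" by (simp add: om_Pz)
      also have "\<dots> = s * om X V1 + s\<^sup>2 / 2 * c * \<Omega>" by (simp add: P0[OF s] omR \<Omega>_def)
      finally show ?thesis using hc[OF s] by simp
    qed
    ultimately show "((\<lambda>s. fZ (y s)) has_vector_derivative c - s * om X V1 - s\<^sup>2 / 2 * c * \<Omega>) (at s)" by simp
  next
    fix s show "((\<lambda>s. c * s - s\<^sup>2 / 2 * om X V1 - s ^ 3 / 6 * c * \<Omega>) has_vector_derivative c - s * om X V1 - s\<^sup>2 / 2 * c * \<Omega>) (at s)"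
      by (auto intro!: derivative_eq_intros simp: power2_eq_square power3_eq_cube field_simps)
  qed (simp add: y0 fZs)
  have V1e: "V1 = (- t0 / 2 * c) *\<^sub>R Jv X"
  proof -
    have h: "t0 *\<^sub>R V1 + (t0\<^sup>2 / 2 * c) *\<^sub>R Jv X = 0" using P0[OF t0(1)] yt0 by (simp add: Pzs)
    have "t0 *\<^sub>R V1 = - ((t0\<^sup>2 / 2 * c) *\<^sub>R Jv X)" using h by (simp add: eq_neg_iff_add_eq_0)
    moreover have "V1 = (1 / t0) *\<^sub>R (t0 *\<^sub>R V1)" using t0(2) by simp
    ultimately have "V1 = (1 / t0) *\<^sub>R (- ((t0\<^sup>2 / 2 * c) *\<^sub>R Jv X))" by simp
    also have "\<dots> = (- t0 / 2 * c) *\<^sub>R Jv X" using t0(2) by (simp add: power2_eq_square)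
    finally show ?thesis .
  qed
  have cnz: "c \<noteq> 0"
  proof
    assume cz: "c = 0"
    then have V0: "V1 = 0" using V1e by simp
    have "y t = 0" if t: "t \<in> I" for t
    proof -
      have "Pz (y t) = 0" using P0[OF t] V0 cz by simp
      moreover have "fZ (y t) = 0" using F0[OF t] V0 cz by (simp add: omR)
      ultimately show ?thesis using Pz_dec[of "y t"] by simp
    qed
    then show False using ynz by blast
  qed
  have omV: "om X V1 = - t0 / 2 * c * \<Omega>" by (simp add: V1e omR \<Omega>_def)
  have "c * t0 - t0\<^sup>2 / 2 * om X V1 - t0 ^ 3 / 6 * c * \<Omega> = 0" using F0[OF t0(1)] yt0 by (simp add: fZs)
  then have "c * t0 + t0 ^ 3 / 4 * c * \<Omega> - t0 ^ 3 / 6 * c * \<Omega> = 0"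
    unfolding omV by (simp add: power2_eq_square power3_eq_cube)
  then have "(c * t0) * (12 + t0\<^sup>2 * \<Omega>) = 0"
    by (simp add: power2_eq_square power3_eq_cube algebra_simps)
  then have "12 + t0\<^sup>2 * \<Omega> = 0" using cnz t0(2) by simp
  then show ?thesis by (simp add: \<Omega>_def)
qed


lemma lt_line: "lt_vel br (\<lambda>t. t *\<^sub>R p) (\<lambda>t. p) = (\<lambda>s. p)"
  by (rule ext) (simp add: lt_vel_def brL br_alt)

lemma geod_exists:
  assumes p: "fZ p = 0"
  shows "geodesic_on br B UNIV (\<lambda>t. t *\<^sub>R p) (\<lambda>t. p)"
  unfolding geodesic_on_def lt_line
proof (intro conjI ballI exI[of _ "\<lambda>t. 0"])
  fix t :: real
  show "((\<lambda>t. t *\<^sub>R p) has_vector_derivative p) (at t)" by (auto intro!: derivative_eq_intros)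
  show "((\<lambda>s. p) has_vector_derivative 0) (at t)" by (rule derivative_intros)
  show "0 + lc_nabla br B p p = 0" using nab_self0[OF p] by simp
qed auto

lemma conj_exists:
  assumes p: "fZ p = 0" "om p (Jv p) = -12"
  shows "conjugate_along br B UNIV (\<lambda>t. t *\<^sub>R p) (\<lambda>t. p) 1"
proof -
  define J where "J = Jv p"
  have sc: "om p (a *\<^sub>R J + b *\<^sub>R Z) = - 12 * a" "fZ (a *\<^sub>R J + b *\<^sub>R Z) = b" for a b
    using p by (simp_all add: J_def omR omZ fZs fZ_Jv fZ_Z)
  define y where "y t = ((t\<^sup>2 - t) / 2) *\<^sub>R J + (t - 3 * t\<^sup>2 + 2 * t ^ 3) *\<^sub>R Z" for t :: real
  define y1 where "y1 t = ((2 * t - 1) / 2) *\<^sub>R J + (1 - 6 * t + 6 * t\<^sup>2) *\<^sub>R Z" for t :: real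
  define w1 where "w1 t = ((1 + 6 * t - 6 * t\<^sup>2) / 2) *\<^sub>R J + (6 * t - 3) *\<^sub>R Z" for t :: real
  define Dx where "Dx t = ((- 1 + t + 3 * t\<^sup>2 - 2 * t ^ 3) / 2) *\<^sub>R J + (1 - 3 * t + 3 * t\<^sup>2) *\<^sub>R Z" for t :: real
  have nabp: "lc_nabla br B p v = (om p v / 2) *\<^sub>R Z - (fZ v / 2) *\<^sub>R J" for v
    by (simp add: nab_v[OF p(1)] J_def)
  have dy: "(y has_vector_derivative y1 t) (at t)" for t
    unfolding y_def y1_def
    by (rule derivative_eq_intros refl | simp add: vec_eq_iff power2_eq_square field_simps)+
  have Deq: "(\<lambda>s. y1 s + lc_nabla br B (lt_vel br (\<lambda>t. t *\<^sub>R p) (\<lambda>t. p) s) (y s)) = Dx"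
  proof
    fix s
    show "y1 s + lc_nabla br B (lt_vel br (\<lambda>t. t *\<^sub>R p) (\<lambda>t. p) s) (y s) = Dx s"
      unfolding lt_line nabp y_def sc y1_def Dx_def
      by (simp add: vec_eq_iff power2_eq_square power3_eq_cube field_simps)
  qed
  have dD: "(Dx has_vector_derivative w1 t) (at t)" for t
    unfolding Dx_def w1_def
    by (rule derivative_eq_intros refl | simp add: vec_eq_iff power2_eq_square field_simps)+
  have E: "w1 t + lc_nabla br B (lt_vel br (\<lambda>t. t *\<^sub>R p) (\<lambda>t. p) t)
       (y1 t + lc_nabla br B (lt_vel br (\<lambda>t. t *\<^sub>R p) (\<lambda>t. p) t) (y t))
      + lc_curv br B (y t) (lt_vel br (\<lambda>t. t *\<^sub>R p) (\<lambda>t. p) t) (lt_vel br (\<lambda>t. t *\<^sub>R p) (\<lambda>t. p) t) = 0" for t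
  proof -
    have "w1 t + lc_nabla br B p (y1 t + lc_nabla br B p (y t)) + lc_curv br B (y t) p p
        = w1 t + ((om p (y1 t) / 2) *\<^sub>R Z - (fZ (y1 t) / 2 + om p (y t)) *\<^sub>R Jv p)"
      using E_formula[OF p(1), of "y1 t" "y t"] by (simp add: add.assoc)
    also have "\<dots> = 0"
      unfolding J_def[symmetric] y1_def y_def sc w1_def
      by (simp add: vec_eq_iff power2_eq_square field_simps)
    finally show ?thesis by (simp add: lt_line)
  qed
  have jf: "jacobi_field br B UNIV (\<lambda>t. t *\<^sub>R p) (\<lambda>t. p) y"
    unfolding jacobi_field_def
    by (rule exI[of _ y1], rule exI[of _ w1]) (use dy dD Deq E in auto)
  have y2: "y 2 \<noteq> 0"
  proof
    assume "y 2 = 0"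
    then have "fZ (y 2) = 0" by (simp add: fZs)
    then show False unfolding y_def sc by simp
  qed
  have ex: "\<exists>t\<in>UNIV. y t \<noteq> 0" using y2 by blast
  have y01: "y 0 = 0" "y 1 = 0" by (simp_all add: y_def)
  show ?thesis unfolding conjugate_along_def
    using jf ex y01 by (intro conjI exI[of _ y]) auto
qed


lemma bt_om: "bt x x = om x (Jv x)" by (simp add: bt_def om_Jv)

lemma quad_inst: "quad bt fZ Z (-12)"
  unfolding quad_def
proof (intro conjI allI)
  show "bilinear bt"
    unfolding bilinear_def bt_def linear_iff by (simp add: Jv_lin BL BR add_divide_distrib)
  show "bt x y = bt y x" for x y by (simp add: bt_def B_sym)
  show "bt Z x = 0" for x by (simp add: bt_def Jv_Z BL)
  show "linear fZ" by (rule lin_fZ)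
  show "fZ Z = 1" by (rule fZ_Z)
qed simp

lemma v_iff: "x \<in> {v. \<forall>z\<in>{z. \<forall>x. br z x = 0}. B v z = 0} \<longleftrightarrow> fZ x = 0"
proof
  assume "x \<in> {v. \<forall>z\<in>{z. \<forall>x. br z x = 0}. B v z = 0}"
  then have "B x Z = 0" using brZ1 by auto
  then show "fZ x = 0" by (simp add: fZ_def)
next
  assume x: "fZ x = 0"
  show "x \<in> {v. \<forall>z\<in>{z. \<forall>x. br z x = 0}. B v z = 0}"
  proof (clarify)
    fix z assume "\<forall>y. br z y = 0"
    then have "z \<in> Cn" by (simp add: Cn_def)
    then obtain t where "z = t *\<^sub>R Z" using in_Cn by auto
    then show "B x z = 0" using x by (simp add: BR BZ)
  qed
qed

lemma CL_eq:
  "{\<gamma> t0 | I \<gamma> \<gamma>' t0. geodesic_on br B I \<gamma> \<gamma>' \<and> 0 \<in> I \<and> \<gamma> 0 = 0 \<and>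
      \<gamma>' 0 \<in> {v. \<forall>z\<in>{z. \<forall>x. br z x = 0}. B v z = 0} - {0} \<and> conjugate_along br B I \<gamma> \<gamma>' t0}
   = {x. fZ x = 0 \<and> bt x x = -12}"
proof (rule set_eqI, rule iffI)
  fix x0 assume "x0 \<in> {\<gamma> t0 | I \<gamma> \<gamma>' t0. geodesic_on br B I \<gamma> \<gamma>' \<and> 0 \<in> I \<and> \<gamma> 0 = 0 \<and>
      \<gamma>' 0 \<in> {v. \<forall>z\<in>{z. \<forall>x. br z x = 0}. B v z = 0} - {0} \<and> conjugate_along br B I \<gamma> \<gamma>' t0}"
  then obtain I \<gamma> \<gamma>' t0 where x0: "x0 = \<gamma> t0" and g: "geodesic_on br B I \<gamma> \<gamma>'" and I0: "0 \<in> I" and g0: "\<gamma> 0 = 0"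
    and v: "\<gamma>' 0 \<in> {v. \<forall>z\<in>{z. \<forall>x. br z x = 0}. B v z = 0}"
    and c: "conjugate_along br B I \<gamma> \<gamma>' t0" by blast
  define X where "X = \<gamma>' 0"
  have X: "fZ X = 0" using v v_iff by (simp add: X_def)
  have oI: "open I" and iI: "is_interval I" using g by (auto simp: geodesic_on_def)
  have t0: "t0 \<in> I" "t0 \<noteq> 0" using c by (auto simp: conjugate_along_def)
  obtain y where J: "jacobi_field br B I \<gamma> \<gamma>' y" and y0: "y 0 = 0" and yt0: "y t0 = 0"
    and ynz: "\<exists>t\<in>I. y t \<noteq> 0"
    using c by (auto simp: conjugate_along_def)
  have line: "\<And>t. t \<in> I \<Longrightarrow> \<gamma> t = t *\<^sub>R X \<and> \<gamma>' t = X \<and> lt_vel br \<gamma> \<gamma>' t = X"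
    using geod_line[OF g I0 g0 X_def[symmetric] X] by blast
  have "t0\<^sup>2 * om X (Jv X) = -12"
    by (rule jac_forward[OF X oI iI I0 t0 _ J y0 yt0 ynz]) (use line in blast)
  moreover have "\<gamma> t0 = t0 *\<^sub>R X" using line[OF t0(1)] by blast
  ultimately have "fZ (\<gamma> t0) = 0" "bt (\<gamma> t0) (\<gamma> t0) = -12"
    using X by (simp_all add: fZs bt_om omL omR Jv_lin power2_eq_square)
  then show "x0 \<in> {x. fZ x = 0 \<and> bt x x = -12}" using x0 by simp
next
  fix x assume "x \<in> {x. fZ x = 0 \<and> bt x x = -12}"
  then have x: "fZ x = 0" "bt x x = -12" by auto
  have xnz: "x \<noteq> 0" using x(2) by (auto simp: bt_def Jv_0 BL)
  have "x = (\<lambda>t. t *\<^sub>R x) 1" by simp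
  moreover have "geodesic_on br B UNIV (\<lambda>t. t *\<^sub>R x) (\<lambda>t. x)" by (rule geod_exists[OF x(1)])
  moreover have "conjugate_along br B UNIV (\<lambda>t. t *\<^sub>R x) (\<lambda>t. x) 1"
    by (rule conj_exists[OF x(1)]) (use x(2) in \<open>simp add: bt_om\<close>)
  moreover have "(\<lambda>t. x) 0 \<in> {v. \<forall>z\<in>{z. \<forall>x. br z x = 0}. B v z = 0} - {0}"
    using v_iff[of x] x(1) xnz by simp
  ultimately show "x \<in> {\<gamma> t0 | I \<gamma> \<gamma>' t0. geodesic_on br B I \<gamma> \<gamma>' \<and> 0 \<in> I \<and> \<gamma> 0 = 0 \<and>
      \<gamma>' 0 \<in> {v. \<forall>z\<in>{z. \<forall>x. br z x = 0}. B v z = 0} - {0} \<and> conjugate_along br B I \<gamma> \<gamma>' t0}"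
    unfolding mem_Collect_eq
    by (intro exI[of _ UNIV] exI[of _ "\<lambda>t. t *\<^sub>R x"] exI[of _ "\<lambda>t. x"] exI[of _ 1]) auto
qed

lemma main_nil2:
  "let \<zz> = {z. \<forall>x. br z x = 0};
       \<vv> = {v. \<forall>z\<in>\<zz>. B v z = 0};
       CL = {\<gamma> t0 | I \<gamma> \<gamma>' t0. geodesic_on br B I \<gamma> \<gamma>' \<and> 0 \<in> I \<and> \<gamma> 0 = 0 \<and>
                \<gamma>' 0 \<in> \<vv> - {0} \<and> conjugate_along br B I \<gamma> \<gamma>' t0}
   in CL \<subseteq> id ` \<vv> \<and> analytic_submanifold CL"
proof -
  have SS: "quad.SS bt fZ (-12) = {x. fZ x = 0 \<and> bt x x = -12}"
    by (simp add: quad.SS_def[OF quad_inst])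
  have "analytic_submanifold {x. fZ x = 0 \<and> bt x x = -12}"
    using quad.SS_submanifold[OF quad_inst] SS by simp
  moreover have "{x. fZ x = 0 \<and> bt x x = -12} \<subseteq> id ` {v. \<forall>z\<in>{z. \<forall>x. br z x = 0}. B v z = 0}"
    using v_iff by auto
  ultimately show ?thesis unfolding Let_def CL_eq by simp
qed

end

theorem mainTheorem6:
  fixes br :: "real^'n \<Rightarrow> real^'n \<Rightarrow> real^'n"
    and B :: "real^'n \<Rightarrow> real^'n \<Rightarrow> real"
  assumes br_bilin: "bilinear br"
    and br_alt: "\<And>x. br x x = 0"
    and two_step: "\<And>x y z. br (br x y) z = 0"
    and nonabelian: "\<exists>x y. br x y \<noteq> 0"
    and B_bilin: "bilinear B"
    and B_sym: "\<And>x y. B x y = B y x"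
    and B_nondeg: "\<And>x. (\<forall>y. B x y = 0) \<Longrightarrow> x = 0"
    and dim_center: "dim {z. \<forall>x. br z x = 0} = 1"
    and B_center_nondeg: "\<And>z. z \<in> {z. \<forall>x. br z x = 0} \<Longrightarrow>
                             (\<forall>w\<in>{z. \<forall>x. br z x = 0}. B z w = 0) \<Longrightarrow> z = 0"
  shows "let \<zz> = {z. \<forall>x. br z x = 0};
             \<vv> = {v. \<forall>z\<in>\<zz>. B v z = 0};
             CL = {\<gamma> t0 | I \<gamma> \<gamma>' t0. geodesic_on br B I \<gamma> \<gamma>' \<and> 0 \<in> I \<and> \<gamma> 0 = 0 \<and>
                      \<gamma>' 0 \<in> \<vv> - {0} \<and> conjugate_along br B I \<gamma> \<gamma>' t0}
         in CL \<subseteq> id ` \<vv> \<and> analytic_submanifold CL"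
proof -
  interpret nil2 br B
    by (rule nil2.intro[OF br_bilin br_alt two_step B_bilin B_sym B_nondeg dim_center B_center_nondeg])
  show ?thesis by (rule main_nil2)
qed

end
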